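(* Let $\Omega$, $s$, $c$ be as in the context. If $\bar\rho\in X$ satisfies condition (N), then there exists a unique $p^*\in\Sigma(\bar\rho)$ such that $p^*\ge\tilde p$ on $\Omega$ for every $\tilde p\in\Sigma(\bar\rho)$; that is, $p^*$ is the largest $c$-concave maximizer of the dual problem.
   Context: $\Omega\subset\mathbb{R}^d$ bounded smooth domain. $s:\mathbb{R}\times\Omega\to\mathbb{R}\cup\{+\infty\}$: (s1) $s(\cdot,x)$ proper, lsc, convex; (s2) $s(z,x)=+\infty$ for $z<0$, $s(0,x)=0$, $\inf s>-\infty$, $\lim_{z\to\infty}\inf_x s(z,x)/z=+\infty$. $s^*(p,x)=\sup_z(pz-s(z,x))$; $\partial s^*$ is the subdifferential in $p$. $E^*(p)=\int_\Omega s^*(p(x),x)dx$, $E(\rho)=\int_\Omega s(\rho,x)dx$, $X=\{\rho\in L^1(\Omega):E(\rho)<\infty\}$, $X^*=\{p:\Omega\to[-\infty,\infty]$ measurable$:E^*(p)<\infty\}$. Cost $c$ on $\mathbb{R}^d\times\mathbb{R}^d$, nonnegative, symmetric, $c(x,x)=0$, $C^1_{loc}$, with $y\mapsto\nabla_xc(x_0,y)$ injective for all $x_0$. $p^c(y)=\inf_{x\in\Omega}p(x)+c(x,y)$, $q^{\bar c}(x)=\sup_{y\in\Omega}q(y)-c(x,y)$; $p$ is $c$-concave if $p^{c\bar c}=p$. $J^*(p,\bar\rho)=\int_\Omega\bar\rho\,p^c\,dx-E^*(p)$ and $\Sigma(\bar\rho)=\operatorname{argmax}_{p\in X^*,\,p^{c\bar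 c}=p}J^*(p,\bar\rho)$. Condition (N): $0<\int_\Omega\bar\rho<\lim_{b\to\infty}\int_\Omega\sup\partial s^*(b,x)dx$. *)

theory Defs
  imports "HOL-Analysis.Analysis"
begin

fun Ck_on :: "nat \<Rightarrow> 'a::euclidean_space set \<Rightarrow> ('a \<Rightarrow> real) \<Rightarrow> bool" where
  "Ck_on 0 U f = continuous_on U f"
| "Ck_on (Suc k) U f =
     (f differentiable_on U \<and> (\<forall>v. Ck_on k U (\<lambda>x. frechet_derivative f (at x) v)))"

definition smooth_on :: "'a::euclidean_space set \<Rightarrow> ('a \<Rightarrow> real) \<Rightarrow> bool" where
  "smooth_on U f \<longleftrightarrow> (\<forall>k. Ck_on k U f)"

definition bounded_smooth_domain :: "'a::euclidean_space set \<Rightarrow> bool" where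
  "bounded_smooth_domain \<Omega> \<longleftrightarrow> open \<Omega> \<and> bounded \<Omega> \<and> connected \<Omega> \<and> \<Omega> \<noteq> {} \<and>
     (\<forall>x0\<in>frontier \<Omega>. \<exists>U \<phi>. open U \<and> x0 \<in> U \<and> smooth_on U \<phi> \<and>
        (\<forall>x\<in>U. frechet_derivative \<phi> (at x) \<noteq> (\<lambda>v. 0)) \<and>
        \<Omega> \<inter> U = {x\<in>U. \<phi> x < 0})"

definition lsc :: "(real \<Rightarrow> ereal) \<Rightarrow> bool" where
  "lsc f \<longleftrightarrow> (\<forall>z. f z \<le> Liminf (at z) f)"

definition ereal_convex :: "(real \<Rightarrow> ereal) \<Rightarrow> bool" where
  "ereal_convex f \<longleftrightarrow> (\<forall>z1 z2 t. 0 \<le> t \<and> t \<le> 1 \<longrightarrow>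
      f ((1 - t) * z1 + t * z2) \<le> ereal (1 - t) * f z1 + ereal t * f z2)"

definition entropy_density :: "'a::euclidean_space set \<Rightarrow> (real \<Rightarrow> 'a \<Rightarrow> ereal) \<Rightarrow> bool" where
  "entropy_density \<Omega> s \<longleftrightarrow>
     (\<forall>x\<in>\<Omega>. (\<exists>z. s z x \<noteq> \<infinity>) \<and> (\<forall>z. s z x \<noteq> -\<infinity>)
            \<and> lsc (\<lambda>z. s z x) \<and> ereal_convex (\<lambda>z. s z x)) \<and>
     (\<forall>x\<in>\<Omega>. (\<forall>z<0. s z x = \<infinity>) \<and> s 0 x = 0) \<and>
     (\<exists>m::real. \<forall>x\<in>\<Omega>. \<forall>z. ereal m \<le> s z x) \<and>
     ((\<lambda>z. (INF x\<in>\<Omega>. s z x) / ereal z) \<longlongrightarrow> \<infinity>) at_top"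

definition admissible_cost :: "('a::euclidean_space \<Rightarrow> 'a \<Rightarrow> real) \<Rightarrow> bool" where
  "admissible_cost c \<longleftrightarrow>
     (\<forall>x y. 0 \<le> c x y) \<and> (\<forall>x y. c x y = c y x) \<and> (\<forall>x. c x x = 0) \<and>
     Ck_on 1 UNIV (\<lambda>(x, y). c x y) \<and>
     (\<forall>x0. inj (\<lambda>y. frechet_derivative (\<lambda>x. c x y) (at x0)))"

text \<open>s^*(p,x) = sup_z (p z - s(z,x)); terms with s(z,x) = +infinity contribute -infinity
  and are therefore omitted, which fixes the convention for p = +-infinity.\<close>
definition sconj :: "(real \<Rightarrow> 'a \<Rightarrow> ereal) \<Rightarrow> ereal \<Rightarrow> 'a \<Rightarrow> ereal" where
  "sconj s p x = (SUP z\<in>{z. s z x \<noteq> \<infinity>}. p * ereal z - s z x)"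

definition subdiff_sconj :: "(real \<Rightarrow> 'a \<Rightarrow> ereal) \<Rightarrow> real \<Rightarrow> 'a \<Rightarrow> real set" where
  "subdiff_sconj s b x =
     {z. \<forall>q::real. sconj s (ereal b) x + ereal (z * (q - b)) \<le> sconj s (ereal q) x}"

definition eintegral :: "'a::euclidean_space set \<Rightarrow> ('a \<Rightarrow> ereal) \<Rightarrow> ereal" where
  "eintegral \<Omega> f = enn2ereal (\<integral>\<^sup>+x. e2ennreal (f x) \<partial>lebesgue_on \<Omega>)
                    - enn2ereal (\<integral>\<^sup>+x. e2ennreal (- f x) \<partial>lebesgue_on \<Omega>)"

definition Efun :: "'a::euclidean_space set \<Rightarrow> (real \<Rightarrow> 'a \<Rightarrow> ereal) \<Rightarrow> ('a \<Rightarrow> real) \<Rightarrow> ereal" where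
  "Efun \<Omega> s \<rho> = eintegral \<Omega> (\<lambda>x. s (\<rho> x) x)"

definition Estar :: "'a::euclidean_space set \<Rightarrow> (real \<Rightarrow> 'a \<Rightarrow> ereal) \<Rightarrow> ('a \<Rightarrow> ereal) \<Rightarrow> ereal" where
  "Estar \<Omega> s p = eintegral \<Omega> (\<lambda>x. sconj s (p x) x)"

definition Xspace :: "'a::euclidean_space set \<Rightarrow> (real \<Rightarrow> 'a \<Rightarrow> ereal) \<Rightarrow> ('a \<Rightarrow> real) set" where
  "Xspace \<Omega> s = {\<rho>. integrable (lebesgue_on \<Omega>) \<rho> \<and> Efun \<Omega> s \<rho> < \<infinity>}"

definition Xstar :: "'a::euclidean_space set \<Rightarrow> (real \<Rightarrow> 'a \<Rightarrow> ereal) \<Rightarrow> ('a \<Rightarrow> ereal) set" where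
  "Xstar \<Omega> s = {p. p \<in> borel_measurable (lebesgue_on \<Omega>) \<and> Estar \<Omega> s p < \<infinity>}"

definition ctrans :: "'a set \<Rightarrow> ('a \<Rightarrow> 'a \<Rightarrow> real) \<Rightarrow> ('a \<Rightarrow> ereal) \<Rightarrow> 'a \<Rightarrow> ereal" where
  "ctrans \<Omega> c p y = (INF x\<in>\<Omega>. p x + ereal (c x y))"

definition ctrans_bar :: "'a set \<Rightarrow> ('a \<Rightarrow> 'a \<Rightarrow> real) \<Rightarrow> ('a \<Rightarrow> ereal) \<Rightarrow> 'a \<Rightarrow> ereal" where
  "ctrans_bar \<Omega> c q x = (SUP y\<in>\<Omega>. q y - ereal (c x y))"

definition c_concave :: "'a set \<Rightarrow> ('a \<Rightarrow> 'a \<Rightarrow> real) \<Rightarrow> ('a \<Rightarrow> ereal) \<Rightarrow> bool" where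
  "c_concave \<Omega> c p \<longleftrightarrow> (\<forall>x\<in>\<Omega>. ctrans_bar \<Omega> c (ctrans \<Omega> c p) x = p x)"

definition Jstar :: "'a::euclidean_space set \<Rightarrow> (real \<Rightarrow> 'a \<Rightarrow> ereal) \<Rightarrow> ('a \<Rightarrow> 'a \<Rightarrow> real)
                     \<Rightarrow> ('a \<Rightarrow> ereal) \<Rightarrow> ('a \<Rightarrow> real) \<Rightarrow> ereal" where
  "Jstar \<Omega> s c p \<rho> = eintegral \<Omega> (\<lambda>y. ereal (\<rho> y) * ctrans \<Omega> c p y) - Estar \<Omega> s p"

definition Sigma_max :: "'a::euclidean_space set \<Rightarrow> (real \<Rightarrow> 'a \<Rightarrow> ereal) \<Rightarrow> ('a \<Rightarrow> 'a \<Rightarrow> real)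
                         \<Rightarrow> ('a \<Rightarrow> real) \<Rightarrow> ('a \<Rightarrow> ereal) set" where
  "Sigma_max \<Omega> s c \<rho> =
     {p. p \<in> Xstar \<Omega> s \<and> c_concave \<Omega> c p \<and>
         (\<forall>q. q \<in> Xstar \<Omega> s \<and> c_concave \<Omega> c q \<longrightarrow> Jstar \<Omega> s c q \<rho> \<le> Jstar \<Omega> s c p \<rho>)}"

definition condN :: "'a::euclidean_space set \<Rightarrow> (real \<Rightarrow> 'a \<Rightarrow> ereal) \<Rightarrow> ('a \<Rightarrow> real) \<Rightarrow> bool" where
  "condN \<Omega> s \<rho> \<longleftrightarrow>
     0 < integral\<^sup>L (lebesgue_on \<Omega>) \<rho> \<and>
     ennreal (integral\<^sup>L (lebesgue_on \<Omega>) \<rho>) <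
       Lim at_top (\<lambda>b. \<integral>\<^sup>+x. e2ennreal (Sup (ereal ` subdiff_sconj s b x)) \<partial>lebesgue_on \<Omega>)"

end

theory Submission
  imports Defs
begin

lemma nn_minorant:
  fixes f :: "'b \<Rightarrow> ennreal"
  shows "\<exists>g\<in>borel_measurable M. (\<forall>x. g x \<le> f x) \<and> integral\<^sup>N M g = integral\<^sup>N M f"
proof -
  let ?A = "integral\<^sup>S M ` {g. simple_function M g \<and> g \<le> f}"
  have ne: "{g. simple_function M g \<and> g \<le> f} \<noteq> {}"
    proof -
    have "(\<lambda>_. 0) \<in> {g. simple_function M g \<and> g \<le> f}" by (auto simp: le_fun_def)
    then show ?thesis by blast
  qed
  then have "?A \<noteq> {}" by blast
  from ennreal_Sup_countable_SUP[OF this] obtain h :: "nat \<Rightarrow> ennreal"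
    where h: "range h \<subseteq> ?A" "Sup ?A = (SUP i. h i)" by blast
  have "\<forall>i. \<exists>g. simple_function M g \<and> g \<le> f \<and> h i = integral\<^sup>S M g"
    using h(1) by blast
  then obtain G where G: "\<And>i. simple_function M (G i)" "\<And>i. G i \<le> f" "\<And>i. h i = integral\<^sup>S M (G i)"
    by metis
  define g where "g x = (SUP i. G i x)" for x
  have gm: "g \<in> borel_measurable M"
    unfolding g_def using G(1) by (intro borel_measurable_SUP) (auto intro: borel_measurable_simple_function)
  have gle: "\<forall>x. g x \<le> f x"
    unfolding g_def using G(2) by (simp add: le_fun_def SUP_least)
  have "integral\<^sup>N M f = (SUP i. h i)"
    using h(2) by (simp add: nn_integral_def)
  also have "\<dots> \<le> integral\<^sup>N M g"
  proof (rule SUP_least)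
    fix i
    have "h i = integral\<^sup>N M (G i)"
      using G by (simp add: nn_integral_eq_simple_integral)
    also have "\<dots> \<le> integral\<^sup>N M g"
      by (rule nn_integral_mono) (auto simp: g_def intro: SUP_upper)
    finally show "h i \<le> integral\<^sup>N M g" .
  qed
  finally have "integral\<^sup>N M f \<le> integral\<^sup>N M g" .
  moreover have "integral\<^sup>N M g \<le> integral\<^sup>N M f"
    using gle by (auto intro: nn_integral_mono)
  ultimately show ?thesis using gm gle by (intro bexI[of _ g]) auto
qed

lemma nn_superadd:
  fixes f g :: "'b \<Rightarrow> ennreal"
  shows "integral\<^sup>N M f + integral\<^sup>N M g \<le> (\<integral>\<^sup>+x. f x + g x \<partial>M)"
proof -
  obtain f' where f': "f' \<in> borel_measurable M" "\<forall>x. f' x \<le> f x" "integral\<^sup>N M f' = integral\<^sup>N M f"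
    using nn_minorant by blast
  obtain g' where g': "g' \<in> borel_measurable M" "\<forall>x. g' x \<le> g x" "integral\<^sup>N M g' = integral\<^sup>N M g"
    using nn_minorant by blast
  have "integral\<^sup>N M f + integral\<^sup>N M g = (\<integral>\<^sup>+x. f' x + g' x \<partial>M)"
    using f' g' by (simp add: nn_integral_add)
  also have "\<dots> \<le> (\<integral>\<^sup>+x. f x + g x \<partial>M)"
    using f'(2) g'(2) by (intro nn_integral_mono add_mono) auto
  finally show ?thesis .
qed

lemma nn_cmult_le:
  fixes f :: "'b \<Rightarrow> ennreal"
  shows "a * integral\<^sup>N M f \<le> (\<integral>\<^sup>+x. a * f x \<partial>M)"
proof -
  obtain f' where f': "f' \<in> borel_measurable M" "\<forall>x. f' x \<le> f x" "integral\<^sup>N M f' = integral\<^sup>N M f"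
    using nn_minorant by blast
  have "a * integral\<^sup>N M f = (\<integral>\<^sup>+x. a * f' x \<partial>M)"
    using f' by (simp add: nn_integral_cmult)
  also have "\<dots> \<le> (\<integral>\<^sup>+x. a * f x \<partial>M)"
    using f'(2) by (intro nn_integral_mono mult_left_mono) auto
  finally show ?thesis .
qed

lemma nn_shift_le:
  fixes f g :: "'b \<Rightarrow> ennreal"
  assumes "\<And>x. x \<in> space M \<Longrightarrow> f x \<le> g x + a" and "a < top"
  shows "integral\<^sup>N M f \<le> integral\<^sup>N M g + a * emeasure M (space M)"
proof -
  obtain f' where f': "f' \<in> borel_measurable M" "\<forall>x. f' x \<le> f x" "integral\<^sup>N M f' = integral\<^sup>N M f"
    using nn_minorant by blast
  have "integral\<^sup>N M f = integral\<^sup>N M f'" using f' by simp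
  also have "\<dots> \<le> (\<integral>\<^sup>+x. (f' x - a) + a \<partial>M)"
    by (intro nn_integral_mono) (auto simp: diff_add_self_ennreal)
  also have "\<dots> = (\<integral>\<^sup>+x. (f' x - a) \<partial>M) + a * emeasure M (space M)"
    using f' by (subst nn_integral_add) auto
  also have "(\<integral>\<^sup>+x. (f' x - a) \<partial>M) \<le> integral\<^sup>N M g"
  proof (intro nn_integral_mono)
    fix x assume x: "x \<in> space M"
    have "f' x \<le> a + g x" using f'(2) assms(1)[OF x] by (metis add.commute order_trans)
    then show "f' x - a \<le> g x" using assms(2) unfolding ennreal_minus_le_iff by auto
  qed
  finally show ?thesis by (simp add: add_right_mono)
qed

lemma nn_split:
  fixes f :: "'b \<Rightarrow> ennreal"
  assumes U: "U \<in> sets M"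
  shows "integral\<^sup>N M f = (\<integral>\<^sup>+x. f x * indicator U x \<partial>M) + (\<integral>\<^sup>+x. f x * indicator (space M - U) x \<partial>M)"
proof (rule antisym)
  obtain f' where f': "f' \<in> borel_measurable M" "\<forall>x. f' x \<le> f x" "integral\<^sup>N M f' = integral\<^sup>N M f"
    using nn_minorant by blast
  have "integral\<^sup>N M f = integral\<^sup>N M f'" using f' by simp
  also have "\<dots> = (\<integral>\<^sup>+x. f' x * indicator U x + f' x * indicator (space M - U) x \<partial>M)"
    by (intro nn_integral_cong) (auto simp: indicator_def)
  also have "\<dots> = (\<integral>\<^sup>+x. f' x * indicator U x \<partial>M) + (\<integral>\<^sup>+x. f' x * indicator (space M - U) x \<partial>M)"
    using f'(1) U by (intro nn_integral_add) auto
  also have "\<dots> \<le> (\<integral>\<^sup>+x. f x * indicator U x \<partial>M) + (\<integral>\<^sup>+x. f x * indicator (space M - U) x \<partial>M)"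
    using f'(2) by (intro add_mono nn_integral_mono mult_right_mono) auto
  finally show "integral\<^sup>N M f \<le> \<dots>" .
next
  have "(\<integral>\<^sup>+x. f x * indicator U x \<partial>M) + (\<integral>\<^sup>+x. f x * indicator (space M - U) x \<partial>M)
        \<le> (\<integral>\<^sup>+x. f x * indicator U x + f x * indicator (space M - U) x \<partial>M)"
    by (rule nn_superadd)
  also have "\<dots> = integral\<^sup>N M f"
    by (intro nn_integral_cong) (auto simp: indicator_def)
  finally show "(\<integral>\<^sup>+x. f x * indicator U x \<partial>M) + (\<integral>\<^sup>+x. f x * indicator (space M - U) x \<partial>M) \<le> integral\<^sup>N M f" .
qed


lemma finite_net:
  fixes S :: "'x::euclidean_space set"
  assumes "bounded S" "e > 0"
  shows "\<exists>F. finite F \<and> F \<subseteq> S \<and> (\<forall>x\<in>S. \<exists>f\<in>F. dist x f < e)"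
proof -
  have "compact (closure S)" using assms(1) by simp
  then have "seq_compact (closure S)" by (rule compact_imp_seq_compact)
  then have tb: "\<forall>\<epsilon>>0. \<exists>k. finite k \<and> k \<subseteq> closure S \<and> closure S \<subseteq> (\<Union>x\<in>k. ball x \<epsilon>)"
    by (rule seq_compact_imp_totally_bounded)
  have e2: "e / 2 > 0" using assms(2) by simp
  obtain k where k: "finite k" "k \<subseteq> closure S" "closure S \<subseteq> (\<Union>z\<in>k. ball z (e/2))"
    using tb[rule_format, OF e2] by (elim exE conjE)
  define k' where "k' = {z\<in>k. \<exists>w\<in>S. dist z w < e/2}"
  define pick where "pick z = (SOME w. w \<in> S \<and> dist z w < e/2)" for z
  have pick: "pick z \<in> S \<and> dist z (pick z) < e/2" if "z \<in> k'" for z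
  proof -
    have "\<exists>w. w \<in> S \<and> dist z w < e/2" using that unfolding k'_def by blast
    then show ?thesis unfolding pick_def by (rule someI_ex)
  qed
  have fin: "finite (pick ` k')" using k(1) unfolding k'_def by simp
  have sub: "pick ` k' \<subseteq> S" using pick by blast
  have cov: "\<exists>f\<in>pick ` k'. dist x f < e" if x: "x \<in> S" for x
  proof -
    have "x \<in> closure S" using x closure_subset by blast
    then have "x \<in> (\<Union>z\<in>k. ball z (e/2))" using k(3) by blast
    then obtain z where z: "z \<in> k" "dist z x < e/2" by auto
    then have zk: "z \<in> k'" unfolding k'_def using x by blast
    have "dist x (pick z) \<le> dist x z + dist z (pick z)" by (rule dist_triangle)
    also have "\<dots> < e" using z pick[OF zk] by (simp add: dist_commute)
    finally have "dist x (pick z) < e" .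
    moreover have "pick z \<in> pick ` k'" using zk by (rule imageI)
    ultimately show ?thesis by (rule rev_bexI[rotated])
  qed
  show ?thesis by (rule exI[of _ "pick ` k'"]) (use fin sub cov in blast)
qed

primrec runmax :: "(nat \<Rightarrow> 'x \<Rightarrow> real) \<Rightarrow> nat \<Rightarrow> nat \<Rightarrow> 'x \<Rightarrow> real" where
  "runmax p n 0 = p n"
| "runmax p n (Suc m) = (\<lambda>x. max (runmax p n m x) (p (n + Suc m) x))"

lemma runmax_ge: "j \<le> m \<Longrightarrow> p (n + j) x \<le> runmax p n m x"
proof (induction m)
  case 0 then show ?case by simp
next
  case (Suc m)
  show ?case
  proof (cases "j = Suc m")
    case True then show ?thesis by simp
  next
    case False then have "j \<le> m" using Suc.prems by simp
    then show ?thesis using Suc.IH by (simp add: le_max_iff_disj)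
  qed
qed

lemma runmax_Suc_ge: "runmax p n m x \<le> runmax p n (Suc m) x" by simp

lemma runmax_incseq: "incseq (\<lambda>m. runmax p n m x)"
  by (rule incseq_SucI) simp

lemma runmax_le: "(\<And>i. p i x \<le> B) \<Longrightarrow> runmax p n m x \<le> B"
  by (induction m) auto

lemma runmax_ge_lb: "(\<And>i. B \<le> p i x) \<Longrightarrow> B \<le> runmax p n m x"
  by (induction m) (auto simp: le_max_iff_disj)

lemma runmax_shift: "runmax p (Suc n) m x \<le> runmax p n (Suc m) x"
proof (induction m)
  case 0 then show ?case by simp
next
  case (Suc m)
  have "runmax p (Suc n) (Suc m) x = max (runmax p (Suc n) m x) (p (Suc n + Suc m) x)" by simp
  also have "\<dots> \<le> max (runmax p n (Suc m) x) (p (n + Suc (Suc m)) x)"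
    using Suc.IH by (intro max.mono) auto
  also have "\<dots> = runmax p n (Suc (Suc m)) x" by simp
  finally show ?case .
qed

locale LP =
  fixes \<Omega> :: "'a::euclidean_space set" and s :: "real \<Rightarrow> 'a \<Rightarrow> ereal"
    and c :: "'a \<Rightarrow> 'a \<Rightarrow> real" and \<rho> :: "'a \<Rightarrow> real" and mlb :: real
  assumes \<Omega>open: "open \<Omega>" and \<Omega>bdd: "bounded \<Omega>" and \<Omega>ne: "\<Omega> \<noteq> {}"
    and c_cont: "continuous_on UNIV (\<lambda>(x, y). c x y)"
    and c_nonneg: "\<And>x y. 0 \<le> c x y" and c_diag: "\<And>x. c x x = 0"
    and s_ninf: "\<And>x z. x \<in> \<Omega> \<Longrightarrow> s z x \<noteq> -\<infinity>"
    and s_neg: "\<And>x z. x \<in> \<Omega> \<Longrightarrow> z < 0 \<Longrightarrow> s z x = \<infinity>"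
    and s_zero: "\<And>x. x \<in> \<Omega> \<Longrightarrow> s 0 x = 0"
    and s_lb: "\<And>x z. x \<in> \<Omega> \<Longrightarrow> ereal mlb \<le> s z x"
    and s_super: "((\<lambda>z. (INF x\<in>\<Omega>. s z x) / ereal z) \<longlongrightarrow> \<infinity>) at_top"
    and \<rho>_int: "integrable (lebesgue_on \<Omega>) \<rho>"
    and \<rho>_E: "Efun \<Omega> s \<rho> < \<infinity>"
    and \<rho>_N: "condN \<Omega> s \<rho>"
begin

lemma s_fin: 
  assumes "x \<in> \<Omega>" "s z x \<noteq> \<infinity>"
  shows "0 \<le> z" "\<exists>r. s z x = ereal r \<and> mlb \<le> r"
proof -
  show "0 \<le> z"
  proof (rule ccontr)
    assume "\<not> 0 \<le> z"
    then have "s z x = \<infinity>" using s_neg[OF assms(1)] by simp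
    with assms(2) show False by simp
  qed
  from s_ninf[OF assms(1)] assms(2) obtain r where "s z x = ereal r" by (cases "s z x") auto
  then show "\<exists>r. s z x = ereal r \<and> mlb \<le> r" using s_lb[OF assms(1), of z] by auto
qed

lemma threshold:
  "\<exists>Z>0. \<forall>x\<in>\<Omega>. \<forall>z\<ge>Z. ereal (B * z) \<le> s z x"
proof -
  have "\<forall>\<^sub>F z in at_top. ereal B < (INF x\<in>\<Omega>. s z x) / ereal z"
    using s_super by (simp add: tendsto_PInfty)
  then obtain N where N: "\<And>z. z \<ge> N \<Longrightarrow> ereal B < (INF x\<in>\<Omega>. s z x) / ereal z"
    by (auto simp: eventually_at_top_linorder)
  define Z where "Z = max N 1"
  have "ereal (B * z) \<le> s z x" if x: "x \<in> \<Omega>" and z: "z \<ge> Z" for x z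
  proof -
    have zpos: "z > 0" using z by (simp add: Z_def)
    have lt: "ereal B < (INF x\<in>\<Omega>. s z x) / ereal z" using N z by (simp add: Z_def)
    have le: "(INF x\<in>\<Omega>. s z x) \<le> s z x" using x by (rule INF_lower)
    show ?thesis
    proof (cases "(INF x\<in>\<Omega>. s z x)")
      case (real r)
      with lt zpos have "B < r / z" by simp
      then have "B * z < r" using zpos by (simp add: field_simps)
      then have "ereal (B * z) \<le> ereal r" by simp
      then show ?thesis using le real by (metis order_trans)
    next
      case PInf
      then show ?thesis using le by simp
    next
      case MInf
      then show ?thesis using lt zpos by simp
    qed
  qed
  moreover have "Z > 0" by (simp add: Z_def)
  ultimately show ?thesis by blast
qed

definition sc :: "real \<Rightarrow> 'a \<Rightarrow> ereal" where "sc b x = sconj s (ereal b) x"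

lemma sconj_ge0: "x \<in> \<Omega> \<Longrightarrow> 0 \<le> sconj s p x"
  unfolding sconj_def
  by (rule SUP_upper2[of 0]) (auto simp: s_zero zero_ereal_def[symmetric])

lemma sconj_mono:
  assumes "x \<in> \<Omega>" "p \<le> q"
  shows "sconj s p x \<le> sconj s q x"
  unfolding sconj_def
proof (rule SUP_mono)
  fix z assume z: "z \<in> {z. s z x \<noteq> \<infinity>}"
  then obtain r where r: "s z x = ereal r" using s_fin[OF assms(1)] by auto
  have "0 \<le> z" using z s_fin[OF assms(1)] by auto
  then have "p * ereal z \<le> q * ereal z" using assms(2) by (simp add: ereal_mult_right_mono)
  then have "p * ereal z - s z x \<le> q * ereal z - s z x" using r by (simp add: ereal_minus_mono)
  then show "\<exists>z'\<in>{z. s z x \<noteq> \<infinity>}. p * ereal z - s z x \<le> q * ereal z' - s z' x" using z by blast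
qed

lemma sc_bound_lip:
  "\<exists>Z>0. \<forall>x\<in>\<Omega>. \<forall>b b'. b \<le> b' \<longrightarrow> \<bar>b'\<bar> \<le> M \<longrightarrow>
     sc b' x \<le> sc b x + ereal ((b' - b) * Z) \<and> sc b' x \<le> ereal (max 0 (M * Z - mlb))"
proof -
  obtain Z where Z: "Z > 0" "\<And>x z. x \<in> \<Omega> \<Longrightarrow> z \<ge> Z \<Longrightarrow> ereal ((M + 1) * z) \<le> s z x"
    using threshold[of "M + 1"] by blast
  have "sc b' x \<le> sc b x + ereal ((b' - b) * Z) \<and> sc b' x \<le> ereal (max 0 (M * Z - mlb))"
    if x: "x \<in> \<Omega>" and bb: "b \<le> b'" "\<bar>b'\<bar> \<le> M" for x b b'
  proof -
    have sc0: "0 \<le> sc b x" unfolding sc_def by (rule sconj_ge0[OF x])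
    have "ereal b' * ereal z - s z x \<le> sc b x + ereal ((b' - b) * Z) \<and>
          ereal b' * ereal z - s z x \<le> ereal (max 0 (M * Z - mlb))"
      if z: "s z x \<noteq> \<infinity>" for z
    proof -
      obtain r where r: "s z x = ereal r" "mlb \<le> r" using s_fin(2)[OF x z] by auto
      have z0: "0 \<le> z" using s_fin(1)[OF x z] .
      have trm: "ereal (b * z - r) \<le> sc b x"
        unfolding sc_def sconj_def using z r by (intro SUP_upper2[of z]) auto
      show ?thesis
      proof (cases "z \<le> Z")
        case True
        have "b' * z - r = (b * z - r) + (b' - b) * z" by (simp add: algebra_simps)
        moreover have "(b' - b) * z \<le> (b' - b) * Z" using True bb by (simp add: mult_left_mono)
        ultimately have "ereal (b' * z - r) \<le> ereal (b * z - r) + ereal ((b' - b) * Z)" by simp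
        also have "\<dots> \<le> sc b x + ereal ((b' - b) * Z)" using trm by (rule add_right_mono)
        finally have A: "ereal (b' * z - r) \<le> sc b x + ereal ((b' - b) * Z)" .
        have "b' * z \<le> M * Z" using True z0 bb
          by (metis abs_le_D1 mult_mono order_trans abs_ge_zero)
        then have "b' * z - r \<le> max 0 (M * Z - mlb)" using r by simp
        then have B: "ereal (b' * z - r) \<le> ereal (max 0 (M * Z - mlb))" by (metis ereal_less_eq(3))
        show ?thesis using A B r by simp
      next
        case False
        then have "ereal ((M + 1) * z) \<le> s z x" using Z(2)[OF x] by simp
        then have "(M + 1) * z \<le> r" using r by simp
        moreover have "b' * z \<le> M * z" using bb z0 by (simp add: mult_right_mono)
        moreover have "(M + 1) * z = M * z + z" by (simp add: algebra_simps)
        ultimately have neg: "b' * z - r \<le> 0" using z0 by linarith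
        have "ereal (b' * z - r) \<le> 0" using neg by (simp add: zero_ereal_def)
        then have "ereal (b' * z - r) \<le> sc b x" using sc0 by (rule order_trans)
        also have "\<dots> \<le> sc b x + ereal ((b' - b) * Z)" using bb Z(1) 
          by (simp add: add_increasing2)
        finally have A: "ereal (b' * z - r) \<le> sc b x + ereal ((b' - b) * Z)" .
        have "b' * z - r \<le> max 0 (M * Z - mlb)" using neg by simp
        then have B: "ereal (b' * z - r) \<le> ereal (max 0 (M * Z - mlb))" by (metis ereal_less_eq(3))
        show ?thesis using A B r by simp
      qed
    qed
    then show ?thesis unfolding sc_def sconj_def
      by (auto intro!: SUP_least)
  qed
  then show ?thesis using Z(1) by blast
qed

definition scr :: "real \<Rightarrow> 'a \<Rightarrow> real" where "scr b x = real_of_ereal (sc b x)"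

lemma sc_fin:
  assumes x: "x \<in> \<Omega>"
  shows "sc b x = ereal (scr b x)" "0 \<le> scr b x"
proof -
  obtain Z where "\<forall>x\<in>\<Omega>. \<forall>b0 b'. b0 \<le> b' \<longrightarrow> \<bar>b'\<bar> \<le> \<bar>b\<bar> \<longrightarrow>
     sc b' x \<le> sc b0 x + ereal ((b' - b0) * Z) \<and> sc b' x \<le> ereal (max 0 (\<bar>b\<bar> * Z - mlb))"
    using sc_bound_lip[of "\<bar>b\<bar>"] by blast
  then have "sc b x \<le> ereal (max 0 (\<bar>b\<bar> * Z - mlb))" using x by blast
  then obtain K where up: "sc b x \<le> ereal K" by blast
  have lo: "0 \<le> sc b x" unfolding sc_def by (rule sconj_ge0[OF x])
  from up lo show "sc b x = ereal (scr b x)" unfolding scr_def by (cases "sc b x") auto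
  from up lo show "0 \<le> scr b x" unfolding scr_def by (cases "sc b x") auto
qed

lemma sc_term_le:
  assumes x: "x \<in> \<Omega>" and r: "s z x = ereal r"
  shows "b * z - r \<le> scr b x"
proof -
  have "ereal (b * z - r) \<le> sc b x"
    unfolding sc_def sconj_def using r by (intro SUP_upper2[of z]) auto
  then show ?thesis using sc_fin[OF x, of b] by simp
qed

lemma scr_convex:
  assumes x: "x \<in> \<Omega>"
  shows "convex_on UNIV (\<lambda>b. scr b x)"
proof (rule convex_onI)
  fix t a b :: real assume t: "0 < t" "t < 1"
  have "sc ((1 - t) *\<^sub>R a + t *\<^sub>R b) x \<le> ereal ((1 - t) * scr a x + t * scr b x)"
    unfolding sc_def sconj_def
  proof (rule SUP_least)
    fix z assume z: "z \<in> {z. s z x \<noteq> \<infinity>}"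
    then obtain r where r: "s z x = ereal r" using s_fin[OF x] by auto
    have "((1 - t) *\<^sub>R a + t *\<^sub>R b) * z - r = (1 - t) * (a * z - r) + t * (b * z - r)"
      by (simp add: algebra_simps)
    also have "\<dots> \<le> (1 - t) * scr a x + t * scr b x"
      using sc_term_le[OF x r, of a] sc_term_le[OF x r, of b] t
      by (intro add_mono mult_left_mono) auto
    finally show "ereal ((1 - t) *\<^sub>R a + t *\<^sub>R b) * ereal z - s z x
        \<le> ereal ((1 - t) * scr a x + t * scr b x)" using r by simp
  qed
  then show "scr ((1 - t) *\<^sub>R a + t *\<^sub>R b) x \<le> (1 - t) * scr a x + t * scr b x"
    using sc_fin[OF x] by simp
qed auto

lemma subdiff_iff:
  assumes x: "x \<in> \<Omega>"
  shows "z \<in> subdiff_sconj s b x \<longleftrightarrow> (\<forall>q. scr b x + z * (q - b) \<le> scr q x)"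
  unfolding subdiff_sconj_def using sc_fin[OF x] by (simp add: sc_def[symmetric])

lemma subdiff_nonempty:
  assumes x: "x \<in> \<Omega>"
  shows "\<exists>z. z \<in> subdiff_sconj s b x"
proof -
  define f where "f q = scr q x" for q
  have cf: "convex_on UNIV f" unfolding f_def by (rule scr_convex[OF x])
  define S where "S = (\<lambda>t. (f t - f b) / (t - b)) ` {b<..}"
  have Sne: "S \<noteq> {}" unfolding S_def by auto
  have slope: "(f b - f q) / (b - q) \<le> (f t - f b) / (t - b)" if "q < b" "b < t" for q t
  proof -
    have "(f q - f b) / (q - b) \<le> (f b - f t) / (b - t)"
      using convex_on_slope_le[OF cf _ _ that] by (meson UNIV_I order_trans)
    then show ?thesis by (smt (verit) minus_divide_divide)
  qed
  have bdd: "bdd_below S"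
    unfolding S_def bdd_below_def using slope[of "b - 1"] by force
  define z where "z = Inf S"
  have "scr b x + z * (q - b) \<le> scr q x" for q
  proof (cases q b rule: linorder_cases)
    case less
    have "(f b - f q) / (b - q) \<le> z"
      unfolding z_def using Sne by (intro cInf_greatest) (auto simp: S_def intro: slope[OF less])
    then have "(f b - f q) \<le> z * (b - q)" using less by (simp add: divide_le_eq)
    then show ?thesis unfolding f_def by (simp add: algebra_simps)
  next
    case equal then show ?thesis by simp
  next
    case greater
    have "z \<le> (f q - f b) / (q - b)"
      unfolding z_def using bdd greater by (intro cInf_lower) (auto simp: S_def)
    then have "z * (q - b) \<le> f q - f b" using greater by (simp add: le_divide_eq)
    then show ?thesis unfolding f_def by (simp add: algebra_simps)
  qed
  then show ?thesis using subdiff_iff[OF x] by blast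
qed

definition g :: "real \<Rightarrow> 'a \<Rightarrow> ennreal" where
  "g b x = e2ennreal (Sup (ereal ` subdiff_sconj s b x))"

lemma g_mono:
  assumes x: "x \<in> \<Omega>" and b: "b1 \<le> b2"
  shows "g b1 x \<le> g b2 x"
proof -
  obtain z2 where z2: "z2 \<in> subdiff_sconj s b2 x" using subdiff_nonempty[OF x] by blast
  have "Sup (ereal ` subdiff_sconj s b1 x) \<le> Sup (ereal ` subdiff_sconj s b2 x)"
  proof (rule Sup_least)
    fix y assume "y \<in> ereal ` subdiff_sconj s b1 x"
    then obtain z1 where z1: "z1 \<in> subdiff_sconj s b1 x" and y: "y = ereal z1" by blast
    have i1: "scr b1 x + z1 * (b2 - b1) \<le> scr b2 x" using z1 subdiff_iff[OF x] by blast
    have i2: "scr b2 x + z2 * (b1 - b2) \<le> scr b1 x" using z2 subdiff_iff[OF x] by blast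
    have "z1 * (b2 - b1) \<le> z2 * (b2 - b1)" using i1 i2 by (simp add: algebra_simps)
    then have "z1 \<le> z2 \<or> b1 = b2" using b
      by (metis diff_gt_0_iff_gt mult_le_cancel_right order_le_less)
    then show "y \<le> Sup (ereal ` subdiff_sconj s b2 x)"
    proof
      assume "z1 \<le> z2" then show ?thesis using y z2 by (metis Sup_upper2 ereal_less_eq(3) image_eqI)
    next
      assume "b1 = b2" then show ?thesis using y z1 by (simp add: Sup_upper)
    qed
  qed
  then show ?thesis unfolding g_def by (rule e2ennreal_mono)
qed

lemma g_ineq:
  assumes x: "x \<in> \<Omega>" and bt: "b \<le> t"
  shows "ennreal (t - b) * g b x \<le> e2ennreal (sc t x)"
proof (cases "b = t")
  case True then show ?thesis by simp
next
  case False
  then have bt': "b < t" using bt by simp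
  define D where "D = (scr t x - scr b x) / (t - b)"
  have "Sup (ereal ` subdiff_sconj s b x) \<le> ereal D"
  proof (rule Sup_least)
    fix y assume "y \<in> ereal ` subdiff_sconj s b x"
    then obtain z where z: "z \<in> subdiff_sconj s b x" and y: "y = ereal z" by blast
    have "scr b x + z * (t - b) \<le> scr t x" using z subdiff_iff[OF x] by blast
    then have "z \<le> D" unfolding D_def using bt' by (simp add: le_divide_eq algebra_simps)
    then show "y \<le> ereal D" using y by simp
  qed
  then have "g b x \<le> ennreal D" unfolding g_def by (metis e2ennreal_ereal e2ennreal_mono)
  then have "ennreal (t - b) * g b x \<le> ennreal (t - b) * ennreal D" by (rule mult_left_mono) simp
  also have "\<dots> \<le> ennreal (scr t x)"
  proof (cases "D \<ge> 0")
    case True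
    have "ennreal (t - b) * ennreal D = ennreal ((t - b) * D)" using True bt' by (simp add: ennreal_mult)
    also have "(t - b) * D = scr t x - scr b x" unfolding D_def using bt' by simp
    also have "ennreal (scr t x - scr b x) \<le> ennreal (scr t x)"
      using sc_fin(2)[OF x, of b] by (intro ennreal_leI) simp
    finally show ?thesis .
  next
    case False then show ?thesis by (simp add: ennreal_neg)
  qed
  also have "\<dots> = e2ennreal (sc t x)" using sc_fin[OF x, of t] by simp
  finally show ?thesis .
qed

section \<open>c-transforms at the real level\<close>

definition bdd :: "('a \<Rightarrow> real) \<Rightarrow> bool" where "bdd P \<longleftrightarrow> (\<exists>B. \<forall>x\<in>\<Omega>. \<bar>P x\<bar> \<le> B)"

definition ct :: "('a \<Rightarrow> real) \<Rightarrow> 'a \<Rightarrow> real" where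
  "ct P y = real_of_ereal (ctrans \<Omega> c (\<lambda>x. ereal (P x)) y)"

definition cb :: "('a \<Rightarrow> real) \<Rightarrow> 'a \<Rightarrow> real" where
  "cb Q x = real_of_ereal (ctrans_bar \<Omega> c (\<lambda>y. ereal (Q y)) x)"

lemma ct_props:
  assumes B: "\<And>x. x \<in> \<Omega> \<Longrightarrow> \<bar>P x\<bar> \<le> B" and y: "y \<in> \<Omega>"
  shows "ctrans \<Omega> c (\<lambda>x. ereal (P x)) y = ereal (ct P y)"
    and "\<And>x. x \<in> \<Omega> \<Longrightarrow> ct P y \<le> P x + c x y"
    and "\<And>L. (\<And>x. x \<in> \<Omega> \<Longrightarrow> L \<le> P x + c x y) \<Longrightarrow> L \<le> ct P y"
    and "\<bar>ct P y\<bar> \<le> B"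
proof -
  let ?E = "ctrans \<Omega> c (\<lambda>x. ereal (P x)) y"
  have up: "?E \<le> ereal (P y)" unfolding ctrans_def using y c_diag[of y]
    by (intro INF_lower2[OF y]) auto
  have lo: "ereal (- B) \<le> ?E" unfolding ctrans_def
  proof (rule INF_greatest)
    fix x assume "x \<in> \<Omega>" then show "ereal (- B) \<le> ereal (P x) + ereal (c x y)"
      using B[of x] c_nonneg[of x y] by simp
  qed
  from up lo obtain r where r: "?E = ereal r" by (cases ?E) auto
  then show E: "?E = ereal (ct P y)" unfolding ct_def by simp
  show "ct P y \<le> P x + c x y" if "x \<in> \<Omega>" for x
  proof -
    have "?E \<le> ereal (P x) + ereal (c x y)" unfolding ctrans_def using that by (rule INF_lower)
    then show ?thesis using E by simp
  qed
  show "L \<le> ct P y" if "\<And>x. x \<in> \<Omega> \<Longrightarrow> L \<le> P x + c x y" for L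
  proof -
    have "ereal L \<le> ?E" unfolding ctrans_def using that by (intro INF_greatest) simp
    then show ?thesis using E by simp
  qed
  show "\<bar>ct P y\<bar> \<le> B" using up lo E B[OF y] by auto
qed

lemma cb_props:
  assumes B: "\<And>y. y \<in> \<Omega> \<Longrightarrow> \<bar>Q y\<bar> \<le> B" and x: "x \<in> \<Omega>"
  shows "ctrans_bar \<Omega> c (\<lambda>y. ereal (Q y)) x = ereal (cb Q x)"
    and "\<And>y. y \<in> \<Omega> \<Longrightarrow> Q y - c x y \<le> cb Q x"
    and "\<And>U. (\<And>y. y \<in> \<Omega> \<Longrightarrow> Q y - c x y \<le> U) \<Longrightarrow> cb Q x \<le> U"
    and "\<bar>cb Q x\<bar> \<le> B"
proof -
  let ?E = "ctrans_bar \<Omega> c (\<lambda>y. ereal (Q y)) x"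
  have lo: "ereal (Q x) \<le> ?E" unfolding ctrans_bar_def using x c_diag[of x]
    by (intro SUP_upper2[OF x]) auto
  have up: "?E \<le> ereal B" unfolding ctrans_bar_def
  proof (rule SUP_least)
    fix y assume "y \<in> \<Omega>" then show "ereal (Q y) - ereal (c x y) \<le> ereal B"
      using B[of y] c_nonneg[of x y] by simp
  qed
  from up lo obtain r where r: "?E = ereal r" by (cases ?E) auto
  then show E: "?E = ereal (cb Q x)" unfolding cb_def by simp
  show "Q y - c x y \<le> cb Q x" if "y \<in> \<Omega>" for y
  proof -
    have "ereal (Q y) - ereal (c x y) \<le> ?E" unfolding ctrans_bar_def using that by (rule SUP_upper)
    then show ?thesis using E by simp
  qed
  show "cb Q x \<le> U" if "\<And>y. y \<in> \<Omega> \<Longrightarrow> Q y - c x y \<le> U" for U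
  proof -
    have "?E \<le> ereal U" unfolding ctrans_bar_def using that by (intro SUP_least) simp
    then show ?thesis using E by simp
  qed
  show "\<bar>cb Q x\<bar> \<le> B" using up lo E B[OF x] by auto
qed

lemma c_bound: "\<exists>C0\<ge>0. \<forall>x\<in>\<Omega>. \<forall>y\<in>\<Omega>. c x y \<le> C0"
proof -
  let ?K = "closure \<Omega> \<times> closure \<Omega>"
  have K: "compact ?K" using \<Omega>bdd by (intro compact_Times) auto
  have "continuous_on ?K (\<lambda>(x, y). c x y)" using c_cont continuous_on_subset by blast
  then have "compact ((\<lambda>(x, y). c x y) ` ?K)" using K by (rule compact_continuous_image)
  then have "bounded ((\<lambda>(x, y). c x y) ` ?K)" by (rule compact_imp_bounded)
  then obtain C where C: "\<forall>v\<in>(\<lambda>(x, y). c x y) ` ?K. norm v \<le> C"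
    unfolding bounded_iff by blast
  have "\<forall>x\<in>\<Omega>. \<forall>y\<in>\<Omega>. c x y \<le> max C 0"
  proof (intro ballI)
    fix x y assume "x \<in> \<Omega>" "y \<in> \<Omega>"
    then have "(x, y) \<in> ?K" using closure_subset by blast
    then have "norm (c x y) \<le> C" using C by force
    then show "c x y \<le> max C 0" by simp
  qed
  then show ?thesis by (intro exI[of _ "max C 0"]) auto
qed

lemma c_modulus:
  assumes "e > 0"
  shows "\<exists>d>0. \<forall>x\<in>\<Omega>. \<forall>x'\<in>\<Omega>. \<forall>y\<in>\<Omega>. dist x x' < d \<longrightarrow>
           \<bar>c x y - c x' y\<bar> < e \<and> \<bar>c y x - c y x'\<bar> < e"
proof -
  let ?K = "closure \<Omega> \<times> closure \<Omega>"
  have K: "compact ?K" using \<Omega>bdd by (intro compact_Times) auto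
  have "continuous_on ?K (\<lambda>(x, y). c x y)" using c_cont continuous_on_subset by blast
  then have "uniformly_continuous_on ?K (\<lambda>(x, y). c x y)" using K by (rule compact_uniformly_continuous)
  then obtain d where d: "d > 0" and
    D0: "\<forall>u\<in>?K. \<forall>v\<in>?K. dist v u < d \<longrightarrow> dist ((\<lambda>(x, y). c x y) v) ((\<lambda>(x, y). c x y) u) < e"
    unfolding uniformly_continuous_on_def using assms by blast
  have D: "\<And>u v. u \<in> ?K \<Longrightarrow> v \<in> ?K \<Longrightarrow> dist v u < d \<Longrightarrow> dist ((\<lambda>(x, y). c x y) v) ((\<lambda>(x, y). c x y) u) < e"
    using D0 by blast
  have "\<bar>c x y - c x' y\<bar> < e \<and> \<bar>c y x - c y x'\<bar> < e"
    if "x \<in> \<Omega>" "x' \<in> \<Omega>" "y \<in> \<Omega>" "dist x x' < d" for x x' y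
  proof -
    have m: "x \<in> closure \<Omega>" "x' \<in> closure \<Omega>" "y \<in> closure \<Omega>" using that closure_subset by auto
    have "dist (x, y) (x', y) < d" using that by (simp add: dist_Pair_Pair)
    then have 1: "dist (c x y) (c x' y) < e" using D[of "(x', y)" "(x, y)"] m by auto
    have "dist (y, x) (y, x') < d" using that by (simp add: dist_Pair_Pair)
    then have 2: "dist (c y x) (c y x') < e" using D[of "(y, x')" "(y, x)"] m by auto
    show ?thesis using 1 2 by (simp add: dist_real_def)
  qed
  then show ?thesis using d by blast
qed

definition bnd :: "('a \<Rightarrow> real) \<Rightarrow> real \<Rightarrow> bool" where
  "bnd P B \<longleftrightarrow> (\<forall>x\<in>\<Omega>. \<bar>P x\<bar> \<le> B)"

lemma bndD: "bnd P B \<Longrightarrow> x \<in> \<Omega> \<Longrightarrow> \<bar>P x\<bar> \<le> B" unfolding bnd_def by blast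

lemma ct_bnd: "bnd P B \<Longrightarrow> bnd (ct P) B"
  unfolding bnd_def using ct_props(4) by blast

lemma cb_bnd: "bnd Q B \<Longrightarrow> bnd (cb Q) B"
  unfolding bnd_def using cb_props(4) by blast

lemma ct_le: "bnd P B \<Longrightarrow> x \<in> \<Omega> \<Longrightarrow> y \<in> \<Omega> \<Longrightarrow> ct P y \<le> P x + c x y"
  using ct_props(2) bndD by blast

lemma ct_ge: "bnd P B \<Longrightarrow> y \<in> \<Omega> \<Longrightarrow> (\<And>x. x \<in> \<Omega> \<Longrightarrow> L \<le> P x + c x y) \<Longrightarrow> L \<le> ct P y"
  using ct_props(3) bndD by blast

lemma cb_ge: "bnd Q B \<Longrightarrow> x \<in> \<Omega> \<Longrightarrow> y \<in> \<Omega> \<Longrightarrow> Q y - c x y \<le> cb Q x"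
  using cb_props(2) bndD by blast

lemma cb_le: "bnd Q B \<Longrightarrow> x \<in> \<Omega> \<Longrightarrow> (\<And>y. y \<in> \<Omega> \<Longrightarrow> Q y - c x y \<le> U) \<Longrightarrow> cb Q x \<le> U"
  using cb_props(3) bndD by blast

lemma ct_shift:
  assumes "bnd P B" "bnd Q B'" "\<And>x. x \<in> \<Omega> \<Longrightarrow> P x \<le> Q x + e" "y \<in> \<Omega>"
  shows "ct P y \<le> ct Q y + e"
proof -
  have "ct P y - e \<le> ct Q y"
  proof (rule ct_ge[OF assms(2) assms(4)])
    fix x assume x: "x \<in> \<Omega>"
    show "ct P y - e \<le> Q x + c x y" using ct_le[OF assms(1) x assms(4)] assms(3)[OF x] by simp
  qed
  then show ?thesis by simp
qed

lemma cb_shift: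
  assumes "bnd Q B" "bnd Q' B'" "\<And>y. y \<in> \<Omega> \<Longrightarrow> Q y \<le> Q' y + e" "x \<in> \<Omega>"
  shows "cb Q x \<le> cb Q' x + e"
proof (rule cb_le[OF assms(1) assms(4)])
  fix y assume y: "y \<in> \<Omega>"
  show "Q y - c x y \<le> cb Q' x + e" using cb_ge[OF assms(2) assms(4) y] assms(3)[OF y] by simp
qed

lemma cb_ct_le: "bnd P B \<Longrightarrow> x \<in> \<Omega> \<Longrightarrow> cb (ct P) x \<le> P x"
  by (rule cb_le[OF ct_bnd]) (auto dest: ct_le)

lemma ct_cb_ct: 
  assumes P: "bnd P B" and y: "y \<in> \<Omega>"
  shows "ct (cb (ct P)) y = ct P y"
proof (rule antisym)
  have b1: "bnd (cb (ct P)) B" using P by (intro cb_bnd ct_bnd)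
  show "ct (cb (ct P)) y \<le> ct P y"
    using ct_shift[OF b1 P _ y, of 0] cb_ct_le[OF P] by simp
  show "ct P y \<le> ct (cb (ct P)) y"
  proof (rule ct_ge[OF b1 y])
    fix x assume x: "x \<in> \<Omega>"
    show "ct P y \<le> cb (ct P) x + c x y" using cb_ge[OF ct_bnd[OF P] x y] by simp
  qed
qed

definition cconc :: "('a \<Rightarrow> real) \<Rightarrow> bool" where
  "cconc P \<longleftrightarrow> (\<forall>x\<in>\<Omega>. cb (ct P) x = P x)"

lemma cb_modulus:
  assumes "e > 0"
  shows "\<exists>d>0. \<forall>Q B x x'. bnd Q B \<longrightarrow> x \<in> \<Omega> \<longrightarrow> x' \<in> \<Omega> \<longrightarrow> dist x x' < d \<longrightarrow>
      \<bar>cb Q x - cb Q x'\<bar> \<le> e"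
proof -
  obtain d where d: "d > 0" and D: "\<And>x x' y. x \<in> \<Omega> \<Longrightarrow> x' \<in> \<Omega> \<Longrightarrow> y \<in> \<Omega> \<Longrightarrow>
      dist x x' < d \<Longrightarrow> \<bar>c x y - c x' y\<bar> < e \<and> \<bar>c y x - c y x'\<bar> < e"
    using c_modulus[OF assms] by metis
  have "cb Q x \<le> cb Q x' + e" if Q: "bnd Q B" and x: "x \<in> \<Omega>" "x' \<in> \<Omega>" "dist x x' < d" for Q B x x'
  proof (rule cb_le[OF Q x(1)])
    fix y assume y: "y \<in> \<Omega>"
    have "Q y - c x' y \<le> cb Q x'" by (rule cb_ge[OF Q x(2) y])
    then show "Q y - c x y \<le> cb Q x' + e" using D[OF x(1) x(2) y x(3)] by linarith
  qed
  note H = this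
  have "\<bar>cb Q x - cb Q x'\<bar> \<le> e" if Q: "bnd Q B" and x: "x \<in> \<Omega>" "x' \<in> \<Omega>" "dist x x' < d" for Q B x x'
    using H[OF Q x(1) x(2) x(3)] H[OF Q x(2) x(1)] x(3) by (simp add: dist_commute)
  then show ?thesis using d by blast
qed

lemma ct_modulus:
  assumes "e > 0"
  shows "\<exists>d>0. \<forall>P B y y'. bnd P B \<longrightarrow> y \<in> \<Omega> \<longrightarrow> y' \<in> \<Omega> \<longrightarrow> dist y y' < d \<longrightarrow>
      \<bar>ct P y - ct P y'\<bar> \<le> e"
proof -
  obtain d where d: "d > 0" and D: "\<And>x x' y. x \<in> \<Omega> \<Longrightarrow> x' \<in> \<Omega> \<Longrightarrow> y \<in> \<Omega> \<Longrightarrow>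
      dist x x' < d \<Longrightarrow> \<bar>c x y - c x' y\<bar> < e \<and> \<bar>c y x - c y x'\<bar> < e"
    using c_modulus[OF assms] by metis
  have "ct P y \<le> ct P y' + e" if P: "bnd P B" and y: "y \<in> \<Omega>" "y' \<in> \<Omega>" "dist y y' < d" for P B y y'
  proof -
    have "ct P y - e \<le> ct P y'"
    proof (rule ct_ge[OF P y(2)])
      fix x assume x: "x \<in> \<Omega>"
      have "ct P y \<le> P x + c x y" by (rule ct_le[OF P x y(1)])
      then show "ct P y - e \<le> P x + c x y'" using D[OF y(1) y(2) x y(3)] by linarith
    qed
    then show ?thesis by simp
  qed
  note H = this
  have "\<bar>ct P y - ct P y'\<bar> \<le> e" if P: "bnd P B" and y: "y \<in> \<Omega>" "y' \<in> \<Omega>" "dist y y' < d" for P B y y'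
    using H[OF P y(1) y(2) y(3)] H[OF P y(2) y(1)] y(3) by (simp add: dist_commute)
  then show ?thesis using d by blast
qed

definition C0 :: real where "C0 = (SOME C. C \<ge> 0 \<and> (\<forall>x\<in>\<Omega>. \<forall>y\<in>\<Omega>. c x y \<le> C))"

lemma C0: "C0 \<ge> 0" "\<And>x y. x \<in> \<Omega> \<Longrightarrow> y \<in> \<Omega> \<Longrightarrow> c x y \<le> C0"
proof -
  have "C0 \<ge> 0 \<and> (\<forall>x\<in>\<Omega>. \<forall>y\<in>\<Omega>. c x y \<le> C0)"
    unfolding C0_def using c_bound by (rule someI_ex)
  then show "C0 \<ge> 0" "\<And>x y. x \<in> \<Omega> \<Longrightarrow> y \<in> \<Omega> \<Longrightarrow> c x y \<le> C0" by auto
qed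

lemma ct_cong: "(\<And>x. x \<in> \<Omega> \<Longrightarrow> P x = P' x) \<Longrightarrow> ct P y = ct P' y"
  unfolding ct_def ctrans_def by (simp cong: INF_cong)

lemma cb_cong: "(\<And>x. x \<in> \<Omega> \<Longrightarrow> Q x = Q' x) \<Longrightarrow> cb Q y = cb Q' y"
  unfolding cb_def ctrans_bar_def by (simp cong: SUP_cong)

lemma cconc_cong: "(\<And>x. x \<in> \<Omega> \<Longrightarrow> P x = P' x) \<Longrightarrow> cconc P \<longleftrightarrow> cconc P'"
  unfolding cconc_def
proof -
  assume "\<And>x. x \<in> \<Omega> \<Longrightarrow> P x = P' x"
  then have "ct P = ct P'" by (intro ext ct_cong)
  then show "(\<forall>x\<in>\<Omega>. cb (ct P) x = P x) = (\<forall>x\<in>\<Omega>. cb (ct P') x = P' x)"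
    using \<open>\<And>x. x \<in> \<Omega> \<Longrightarrow> P x = P' x\<close> by auto
qed

lemma cconc_osc:
  assumes P: "cconc P" "bnd P B" and x: "x \<in> \<Omega>" "x' \<in> \<Omega>"
  shows "P x' \<le> P x + C0"
proof -
  have "cb (ct P) x' \<le> P x + C0"
  proof (rule cb_le[OF ct_bnd[OF P(2)] x(2)])
    fix y assume y: "y \<in> \<Omega>"
    show "ct P y - c x' y \<le> P x + C0"
      using ct_le[OF P(2) x(1) y] C0(2)[OF x(1) y] c_nonneg[of x' y] by linarith
  qed
  then show ?thesis using P(1) x(2) unfolding cconc_def by simp
qed

lemma cconc_modulus:
  assumes "e > 0"
  shows "\<exists>d>0. \<forall>P B x x'. cconc P \<longrightarrow> bnd P B \<longrightarrow> x \<in> \<Omega> \<longrightarrow> x' \<in> \<Omega> \<longrightarrow> dist x x' < d \<longrightarrow>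
      \<bar>P x - P x'\<bar> \<le> e"
proof -
  obtain d where d: "d > 0" and D: "\<forall>Q B x x'. bnd Q B \<longrightarrow> x \<in> \<Omega> \<longrightarrow> x' \<in> \<Omega> \<longrightarrow> dist x x' < d \<longrightarrow>
      \<bar>cb Q x - cb Q x'\<bar> \<le> e" using cb_modulus[OF assms] by blast
  have "\<bar>P x - P x'\<bar> \<le> e" if "cconc P" "bnd P B" "x \<in> \<Omega>" "x' \<in> \<Omega>" "dist x x' < d" for P B x x'
    using D[rule_format, OF ct_bnd[OF that(2)] that(3-5)] that(1,3,4) unfolding cconc_def by simp
  then show ?thesis using d by blast
qed

lemma cconc_max:
  assumes "cconc P1" "bnd P1 B" "cconc P2" "bnd P2 B"
  shows "cconc (\<lambda>x. max (P1 x) (P2 x))"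
proof -
  let ?M = "\<lambda>x. max (P1 x) (P2 x)"
  have bM: "bnd ?M B" using assms unfolding bnd_def by (force simp: abs_le_iff max_def)
  have "cb (ct ?M) x = ?M x" if x: "x \<in> \<Omega>" for x
  proof (rule antisym)
    show "cb (ct ?M) x \<le> ?M x" by (rule cb_ct_le[OF bM x])
    have "P1 x \<le> cb (ct ?M) x"
    proof -
      have "cb (ct P1) x \<le> cb (ct ?M) x + 0"
        by (rule cb_shift[OF ct_bnd[OF assms(2)] ct_bnd[OF bM] _ x])
           (simp add: ct_shift[OF assms(2) bM, of 0, simplified])
      then show ?thesis using assms(1) x unfolding cconc_def by simp
    qed
    moreover have "P2 x \<le> cb (ct ?M) x"
    proof -
      have "cb (ct P2) x \<le> cb (ct ?M) x + 0"
        by (rule cb_shift[OF ct_bnd[OF assms(4)] ct_bnd[OF bM] _ x])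
           (simp add: ct_shift[OF assms(4) bM, of 0, simplified])
      then show ?thesis using assms(3) x unfolding cconc_def by simp
    qed
    ultimately show "?M x \<le> cb (ct ?M) x" by simp
  qed
  then show ?thesis unfolding cconc_def by blast
qed

lemma cconc_cbct:
  assumes P: "bnd P B"
  shows "cconc (cb (ct P))"
  unfolding cconc_def
proof
  fix x assume x: "x \<in> \<Omega>"
  have "cb (ct (cb (ct P))) x = cb (ct P) x"
    by (rule cb_cong) (rule ct_cb_ct[OF P])
  then show "cb (ct (cb (ct P))) x = cb (ct P) x" .
qed

lemma cconc_unif_limit:
  assumes Pn: "\<And>n. cconc (Pn n)" "\<And>n. bnd (Pn n) B" and P: "bnd P B"
    and conv: "\<And>e. e > 0 \<Longrightarrow> \<exists>n. \<forall>x\<in>\<Omega>. \<bar>Pn n x - P x\<bar> \<le> e"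
  shows "cconc P"
  unfolding cconc_def
proof
  fix x assume x: "x \<in> \<Omega>"
  have "\<bar>cb (ct P) x - P x\<bar> \<le> 2 * e" if e: "e > 0" for e
  proof -
    obtain n where n: "\<forall>x\<in>\<Omega>. \<bar>Pn n x - P x\<bar> \<le> e" using conv[OF e] by blast
    have a1: "ct P y \<le> ct (Pn n) y + e" if "y \<in> \<Omega>" for y
      by (rule ct_shift[OF P Pn(2) _ that]) (use n in force)
    have a2: "ct (Pn n) y \<le> ct P y + e" if "y \<in> \<Omega>" for y
      by (rule ct_shift[OF Pn(2) P _ that]) (use n in force)
    have b1: "cb (ct P) x \<le> cb (ct (Pn n)) x + e"
      by (rule cb_shift[OF ct_bnd[OF P] ct_bnd[OF Pn(2)] a1 x])
    have b2: "cb (ct (Pn n)) x \<le> cb (ct P) x + e"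
      by (rule cb_shift[OF ct_bnd[OF Pn(2)] ct_bnd[OF P] a2 x])
    have "cb (ct (Pn n)) x = Pn n x" using Pn(1)[of n] x unfolding cconc_def by blast
    then show ?thesis using b1 b2 n x by force
  qed
  note H = this
  show "cb (ct P) x = P x"
  proof (rule ccontr)
    assume "cb (ct P) x \<noteq> P x"
    then have "\<bar>cb (ct P) x - P x\<bar> / 4 > 0" by simp
    define d where "d = \<bar>cb (ct P) x - P x\<bar>"
    have "d / 4 > 0" using \<open>\<bar>cb (ct P) x - P x\<bar> / 4 > 0\<close> by (simp add: d_def)
    moreover have "d \<le> 2 * (d / 4)" using H[OF \<open>\<bar>cb (ct P) x - P x\<bar> / 4 > 0\<close>] by (simp add: d_def)
    ultimately show False by linarith
  qed
qed

lemma c_concave_iff: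
  assumes P: "bnd P B"
  shows "c_concave \<Omega> c (\<lambda>x. ereal (P x)) \<longleftrightarrow> cconc P"
proof -
  have "ctrans_bar \<Omega> c (ctrans \<Omega> c (\<lambda>x. ereal (P x))) x = ereal (cb (ct P) x)" if x: "x \<in> \<Omega>" for x
  proof -
    have "ctrans_bar \<Omega> c (ctrans \<Omega> c (\<lambda>x. ereal (P x))) x = ctrans_bar \<Omega> c (\<lambda>y. ereal (ct P y)) x"
      unfolding ctrans_bar_def using ct_props(1)[OF bndD[OF P]] by (simp cong: SUP_cong)
    also have "\<dots> = ereal (cb (ct P) x)" by (rule cb_props(1)[OF bndD[OF ct_bnd[OF P]] x])
    finally show ?thesis .
  qed
  then show ?thesis unfolding c_concave_def cconc_def by simp
qed

abbreviation "MM \<equiv> lebesgue_on \<Omega>"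

lemma space_MM[simp]: "space MM = \<Omega>" by simp

lemma \<Omega>_lmeas: "\<Omega> \<in> lmeasurable" using lmeasurable_open[OF \<Omega>bdd \<Omega>open] .

lemma \<Omega>_sets: "\<Omega> \<in> sets lebesgue" using \<Omega>_lmeas by (simp add: fmeasurable_def)

definition mu :: real where "mu = measure lebesgue \<Omega>"

lemma mu_nonneg: "0 \<le> mu" unfolding mu_def by simp

lemma emeasure_MM: "emeasure MM \<Omega> = ennreal mu"
proof -
  have "emeasure MM \<Omega> = emeasure lebesgue \<Omega>" using \<Omega>_sets by (subst emeasure_restrict_space) auto
  also have "\<dots> = ennreal mu" unfolding mu_def using \<Omega>_lmeas
    by (simp add: emeasure_eq_measure2)
  finally show ?thesis .
qed

lemma cont_meas: "continuous_on \<Omega> f \<Longrightarrow> f \<in> borel_measurable MM"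
  using continuous_imp_measurable_on_sets_lebesgue \<Omega>_sets by blast

lemma ct_cont: assumes "bnd P B" shows "continuous_on \<Omega> (ct P)"
  unfolding continuous_on_iff
proof (intro ballI allI impI)
  fix x and e :: real assume x: "x \<in> \<Omega>" and e: "e > 0"
  obtain d where d: "d > 0" and D: "\<forall>P B y y'. bnd P B \<longrightarrow> y \<in> \<Omega> \<longrightarrow> y' \<in> \<Omega> \<longrightarrow> dist y y' < d \<longrightarrow>
      \<bar>ct P y - ct P y'\<bar> \<le> e / 2" using ct_modulus[of "e/2"] e by auto
  have "dist (ct P x') (ct P x) < e" if "x' \<in> \<Omega>" "dist x' x < d" for x'
    using D[rule_format, OF assms that(1) x that(2)] e by (simp add: dist_real_def)
  then show "\<exists>d>0. \<forall>x'\<in>\<Omega>. dist x' x < d \<longrightarrow> dist (ct P x') (ct P x) < e" using d by blast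
qed

lemma cconc_cont: assumes "cconc P" "bnd P B" shows "continuous_on \<Omega> P"
  unfolding continuous_on_iff
proof (intro ballI allI impI)
  fix x and e :: real assume x: "x \<in> \<Omega>" and e: "e > 0"
  obtain d where d: "d > 0" and D: "\<forall>P B x x'. cconc P \<longrightarrow> bnd P B \<longrightarrow> x \<in> \<Omega> \<longrightarrow> x' \<in> \<Omega> \<longrightarrow> dist x x' < d \<longrightarrow>
      \<bar>P x - P x'\<bar> \<le> e / 2" using cconc_modulus[of "e/2"] e by auto
  have "dist (P x') (P x) < e" if "x' \<in> \<Omega>" "dist x' x < d" for x'
    using D[rule_format, OF assms that(1) x that(2)] e by (simp add: dist_real_def)
  then show "\<exists>d>0. \<forall>x'\<in>\<Omega>. dist x' x < d \<longrightarrow> dist (P x') (P x) < e" using d by blast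
qed

lemma eint_real:
  assumes f: "integrable MM f" and F: "\<And>x. x \<in> \<Omega> \<Longrightarrow> F x = ereal (f x)"
  shows "eintegral \<Omega> F = ereal (integral\<^sup>L MM f)"
proof -
  have 1: "(\<integral>\<^sup>+x. e2ennreal (F x) \<partial>MM) = (\<integral>\<^sup>+x. ennreal (f x) \<partial>MM)"
    by (intro nn_integral_cong) (simp add: F)
  have 2: "(\<integral>\<^sup>+x. e2ennreal (- F x) \<partial>MM) = (\<integral>\<^sup>+x. ennreal (- f x) \<partial>MM)"
    by (intro nn_integral_cong) (simp add: F)
  have i1: "(\<integral>\<^sup>+x. ennreal (f x) \<partial>MM) \<noteq> \<infinity>" and i2: "(\<integral>\<^sup>+x. ennreal (- f x) \<partial>MM) \<noteq> \<infinity>"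
    using f by auto
  have e1: "enn2ereal (\<integral>\<^sup>+x. ennreal (f x) \<partial>MM) = ereal (enn2real (\<integral>\<^sup>+x. ennreal (f x) \<partial>MM))"
    using i1 by (cases "(\<integral>\<^sup>+x. ennreal (f x) \<partial>MM)" rule: ennreal_cases) auto
  have e2: "enn2ereal (\<integral>\<^sup>+x. ennreal (- f x) \<partial>MM) = ereal (enn2real (\<integral>\<^sup>+x. ennreal (- f x) \<partial>MM))"
    using i2 by (cases "(\<integral>\<^sup>+x. ennreal (- f x) \<partial>MM)" rule: ennreal_cases) auto
  show ?thesis unfolding eintegral_def 1 2 e1 e2 real_lebesgue_integral_def[OF f] by simp
qed

lemma sc_unif:
  "\<exists>Z>0. \<exists>G. \<forall>x\<in>\<Omega>. \<forall>b b'. b \<le> b' \<longrightarrow> \<bar>b'\<bar> \<le> B \<longrightarrow>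
     scr b' x \<le> scr b x + (b' - b) * Z \<and> scr b' x \<le> G"
proof -
  obtain Z where Z: "Z > 0" "\<forall>x\<in>\<Omega>. \<forall>b b'. b \<le> b' \<longrightarrow> \<bar>b'\<bar> \<le> B \<longrightarrow>
     sc b' x \<le> sc b x + ereal ((b' - b) * Z) \<and> sc b' x \<le> ereal (max 0 (B * Z - mlb))"
    using sc_bound_lip[of B] by blast
  define K where "K = max 0 (B * Z - mlb)"
  have "scr b' x \<le> scr b x + (b' - b) * Z \<and> scr b' x \<le> K"
    if "x \<in> \<Omega>" "b \<le> b'" "\<bar>b'\<bar> \<le> B" for x b b'
  proof -
    have A: "sc b' x \<le> sc b x + ereal ((b' - b) * Z)" and B: "sc b' x \<le> ereal K"
      using Z(2) that unfolding K_def by blast+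
    have "ereal (scr b' x) \<le> ereal (scr b x + (b' - b) * Z)"
      using A sc_fin(1)[OF that(1), of b] sc_fin(1)[OF that(1), of b'] by simp
    moreover have "ereal (scr b' x) \<le> ereal K"
      using B sc_fin(1)[OF that(1), of b'] by simp
    ultimately show ?thesis by (simp only: ereal_less_eq(3))
  qed
  then show ?thesis using Z(1) by blast
qed

definition EI :: "('a \<Rightarrow> real) \<Rightarrow> ennreal" where
  "EI P = (\<integral>\<^sup>+x. ennreal (scr (P x) x) \<partial>MM)"

lemma Estar_eq: "Estar \<Omega> s (\<lambda>x. ereal (P x)) = enn2ereal (EI P)"
proof -
  have 1: "(\<integral>\<^sup>+x. e2ennreal (sconj s (ereal (P x)) x) \<partial>MM) = EI P"
    unfolding EI_def
  proof (intro nn_integral_cong)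
    fix x assume "x \<in> space MM"
    then have x: "x \<in> \<Omega>" by simp
    have "sconj s (ereal (P x)) x = ereal (scr (P x) x)" using sc_fin(1)[OF x, of "P x"] unfolding sc_def .
    then show "e2ennreal (sconj s (ereal (P x)) x) = ennreal (scr (P x) x)" by simp
  qed
  have 2: "(\<integral>\<^sup>+x. e2ennreal (- sconj s (ereal (P x)) x) \<partial>MM) = 0"
  proof -
    have "(\<integral>\<^sup>+x. e2ennreal (- sconj s (ereal (P x)) x) \<partial>MM) = (\<integral>\<^sup>+x. 0 \<partial>MM)"
    proof (intro nn_integral_cong e2ennreal_neg)
      fix x assume "x \<in> space MM"
      then have x: "x \<in> \<Omega>" by simp
      show "- sconj s (ereal (P x)) x \<le> 0" using sconj_ge0[OF x, of "ereal (P x)"] by simp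
    qed
    then show ?thesis by simp
  qed
  show ?thesis unfolding Estar_def eintegral_def 1 2 by (simp add: zero_ennreal.rep_eq)
qed

lemma EI_fin: assumes "bnd P B" shows "EI P < top"
proof -
  obtain Z G where ZG: "\<forall>x\<in>\<Omega>. \<forall>b b'. b \<le> b' \<longrightarrow> \<bar>b'\<bar> \<le> B \<longrightarrow> scr b' x \<le> scr b x + (b' - b) * Z \<and> scr b' x \<le> G"
    using sc_unif[of B] by blast
  have "EI P \<le> (\<integral>\<^sup>+x. ennreal G \<partial>MM)"
    unfolding EI_def
  proof (intro nn_integral_mono ennreal_leI)
    fix x assume "x \<in> space MM"
    then have x: "x \<in> \<Omega>" by simp
    show "scr (P x) x \<le> G" using ZG x bndD[OF assms x] by blast
  qed
  also have "\<dots> = ennreal G * ennreal mu" by (simp add: emeasure_MM)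
  also have "\<dots> < top" by (simp add: ennreal_mult_less_top)
  finally show ?thesis .
qed

lemma \<rho>_meas: "\<rho> \<in> borel_measurable MM" using \<rho>_int by auto

lemma bnd_nonneg: "bnd P B \<Longrightarrow> 0 \<le> B"
  using \<Omega>ne bndD by fastforce

lemma int_\<rho>ct: assumes "bnd P B" shows "integrable MM (\<lambda>y. \<rho> y * ct P y)"
proof -
  have i: "integrable MM (\<lambda>y. B * \<rho> y)" using \<rho>_int by simp
  have m: "(\<lambda>y. \<rho> y * ct P y) \<in> borel_measurable MM"
    using \<rho>_meas cont_meas[OF ct_cont[OF assms]] by measurable
  have ae: "AE x in MM. norm (\<rho> x * ct P x) \<le> norm (B * \<rho> x)"
  proof (rule AE_I2)
    fix x assume "x \<in> space MM"
    then have "\<bar>ct P x\<bar> \<le> B" using bndD[OF ct_bnd[OF assms]] by simp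
    then show "norm (\<rho> x * ct P x) \<le> norm (B * \<rho> x)"
    proof -
      have "\<bar>\<rho> x\<bar> * \<bar>ct P x\<bar> \<le> \<bar>\<rho> x\<bar> * B" using \<open>\<bar>ct P x\<bar> \<le> B\<close> by (intro mult_left_mono) auto
      then show ?thesis using bnd_nonneg[OF assms] by (simp add: abs_mult mult.commute)
    qed
  qed
  show ?thesis by (rule Bochner_Integration.integrable_bound[OF i m ae])
qed

definition JR :: "('a \<Rightarrow> real) \<Rightarrow> real" where
  "JR P = integral\<^sup>L MM (\<lambda>y. \<rho> y * ct P y) - enn2real (EI P)"

lemma JJ_eq: assumes "bnd P B" shows "Jstar \<Omega> s c (\<lambda>x. ereal (P x)) \<rho> = ereal (JR P)"
proof -
  have "eintegral \<Omega> (\<lambda>y. ereal (\<rho> y) * ctrans \<Omega> c (\<lambda>x. ereal (P x)) y) = ereal (integral\<^sup>L MM (\<lambda>y. \<rho> y * ct P y))"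
    by (rule eint_real[OF int_\<rho>ct[OF assms]]) (simp add: ct_props(1)[OF bndD[OF assms]])
  moreover have "enn2ereal (EI P) = ereal (enn2real (EI P))"
    using EI_fin[OF assms] by (cases "EI P" rule: ennreal_cases) auto
  ultimately show ?thesis unfolding Jstar_def JR_def Estar_eq by simp
qed

lemma Estar_gen: "Estar \<Omega> s p = enn2ereal (\<integral>\<^sup>+x. e2ennreal (sconj s (p x) x) \<partial>MM)"
proof -
  have "(\<integral>\<^sup>+x. e2ennreal (- sconj s (p x) x) \<partial>MM) = (\<integral>\<^sup>+x. 0 \<partial>MM)"
  proof (intro nn_integral_cong e2ennreal_neg)
    fix x assume "x \<in> space MM"
    then have x: "x \<in> \<Omega>" by simp
    show "- sconj s (p x) x \<le> 0" using sconj_ge0[OF x, of "p x"] by simp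
  qed
  then show ?thesis unfolding Estar_def eintegral_def by (simp add: zero_ennreal.rep_eq)
qed

lemma \<rho>_nonneg: "AE x in MM. 0 \<le> \<rho> x"
proof -
  define N where "N = {x\<in>space MM. \<rho> x < 0}"
  have Nm: "N \<in> sets MM" unfolding N_def using \<rho>_meas by measurable
  define A where "A = (\<integral>\<^sup>+x. e2ennreal (s (\<rho> x) x) \<partial>MM)"
  have "A \<noteq> top"
  proof
    assume "A = top"
    then have "Efun \<Omega> s \<rho> = \<infinity>" unfolding Efun_def eintegral_def A_def[symmetric] by simp
    with \<rho>_E show False by simp
  qed
  have "top * emeasure MM N = (\<integral>\<^sup>+x. top * indicator N x \<partial>MM)"
    using Nm by (simp add: nn_integral_cmult_indicator)
  also have "\<dots> \<le> A" unfolding A_def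
  proof (intro nn_integral_mono)
    fix x assume x: "x \<in> space MM"
    show "top * indicator N x \<le> e2ennreal (s (\<rho> x) x)"
    proof (cases "x \<in> N")
      case True
      then have "s (\<rho> x) x = \<infinity>" using s_neg x unfolding N_def by auto
      then show ?thesis by simp
    next
      case False then show ?thesis by simp
    qed
  qed
  finally have "emeasure MM N = 0" using \<open>A \<noteq> top\<close>
    by (metis ennreal_mult_eq_top_iff top.extremum_uniqueI)
  then have "N \<in> null_sets MM" using Nm by auto
  then show ?thesis by (rule AE_I') (auto simp: N_def)
qed

definition R :: real where "R = integral\<^sup>L MM \<rho>"

lemma R_pos: "0 < R" using \<rho>_N unfolding condN_def R_def by simp

lemma int_mono_\<rho>:
  assumes u: "integrable MM (\<lambda>y. \<rho> y * u y)" and v: "integrable MM (\<lambda>y. \<rho> y * v y)"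
    and le: "\<And>y. y \<in> \<Omega> \<Longrightarrow> u y \<le> v y"
  shows "integral\<^sup>L MM (\<lambda>y. \<rho> y * u y) \<le> integral\<^sup>L MM (\<lambda>y. \<rho> y * v y)"
proof (rule integral_mono_AE[OF u v])
  show "AE x in MM. \<rho> x * u x \<le> \<rho> x * v x"
  proof -
    have "AE x in MM. x \<in> \<Omega>" by (rule AE_I2) simp
    with \<rho>_nonneg show ?thesis by eventually_elim (auto intro: mult_left_mono le)
  qed
qed

lemma g_eq: "g b x = e2ennreal (Sup (ereal ` subdiff_sconj s b x))" by (simp add: g_def)

lemma condN_b: "\<exists>b \<delta>. \<delta> > 0 \<and> ennreal (R + \<delta>) \<le> (\<integral>\<^sup>+x. g b x \<partial>MM)"
proof -
  define F where "F b = (\<integral>\<^sup>+x. g b x \<partial>MM)" for b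
  have Fmono: "F b1 \<le> F b2" if "b1 \<le> b2" for b1 b2
    unfolding F_def by (intro nn_integral_mono) (use g_mono that in auto)
  have lim: "(F \<longlongrightarrow> (SUP b. F b)) at_top"
  proof (rule order_tendstoI)
    fix a assume "a < (SUP b. F b)"
    then obtain b0 where "a < F b0" by (auto simp: less_SUP_iff)
    then show "\<forall>\<^sub>F t in at_top. a < F t"
      unfolding eventually_at_top_linorder using Fmono by (meson less_le_trans)
  next
    fix a assume "(SUP b. F b) < a"
    then have "F t < a" for t using SUP_upper[of t UNIV F] by (meson UNIV_I le_less_trans)
    then show "\<forall>\<^sub>F t in at_top. F t < a" by simp
  qed
  have "Lim at_top F = (SUP b. F b)" by (rule tendsto_Lim[OF _ lim]) simp
  moreover have "ennreal R < Lim at_top F"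
    using \<rho>_N unfolding condN_def R_def F_def g_def by simp
  ultimately obtain b where b: "ennreal R < F b" by (auto simp: less_SUP_iff)
  then obtain y where y: "ennreal R < y" "y < F b" using dense by blast
  then obtain r where r: "y = ennreal r" "0 \<le> r" by (cases y rule: ennreal_cases) auto
  have "R < r" using y(1) r R_pos by (simp add: ennreal_less_iff)
  then have "r - R > 0" "ennreal (R + (r - R)) \<le> F b" using y r by auto
  then show ?thesis unfolding F_def by blast
qed

lemma scr_mono: "x \<in> \<Omega> \<Longrightarrow> b \<le> b' \<Longrightarrow> scr b x \<le> scr b' x"
  using sconj_mono[of x "ereal b" "ereal b'"] sc_fin[of x b] sc_fin[of x b'] unfolding sc_def by simp

lemma EI_mono: "(\<And>x. x \<in> \<Omega> \<Longrightarrow> P x \<le> Q x) \<Longrightarrow> EI P \<le> EI Q"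
  unfolding EI_def by (intro nn_integral_mono ennreal_leI scr_mono) auto

lemma EI_lower:
  "\<exists>b \<delta>. \<delta> > 0 \<and> (\<forall>P t. b \<le> t \<longrightarrow> (\<forall>x\<in>\<Omega>. t \<le> P x) \<longrightarrow> ennreal ((t - b) * (R + \<delta>)) \<le> EI P)"
proof -
  obtain b \<delta> where bd: "\<delta> > 0" "ennreal (R + \<delta>) \<le> (\<integral>\<^sup>+x. g b x \<partial>MM)" using condN_b by blast
  have "ennreal ((t - b) * (R + \<delta>)) \<le> EI P" if t: "b \<le> t" "\<forall>x\<in>\<Omega>. t \<le> P x" for P t
  proof -
    have "ennreal ((t - b) * (R + \<delta>)) = ennreal (t - b) * ennreal (R + \<delta>)"
      using t R_pos bd by (simp add: ennreal_mult)
    also have "\<dots> \<le> ennreal (t - b) * (\<integral>\<^sup>+x. g b x \<partial>MM)" using bd by (intro mult_left_mono) auto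
    also have "\<dots> \<le> (\<integral>\<^sup>+x. ennreal (t - b) * g b x \<partial>MM)" by (rule nn_cmult_le)
    also have "\<dots> \<le> (\<integral>\<^sup>+x. e2ennreal (sc t x) \<partial>MM)"
      by (intro nn_integral_mono) (use g_ineq t in auto)
    also have "\<dots> = EI (\<lambda>_. t)" unfolding EI_def by (intro nn_integral_cong) (simp add: sc_fin)
    also have "\<dots> \<le> EI P" using t by (intro EI_mono) auto
    finally show ?thesis .
  qed
  then show ?thesis using bd by blast
qed

section \<open>Bounds on the dual functional\<close>

definition bd_pair :: "real \<times> real" where
  "bd_pair = (SOME (b, \<delta>). \<delta> > 0 \<and> (\<forall>P t. b \<le> t \<longrightarrow> (\<forall>x\<in>\<Omega>. t \<le> P x) \<longrightarrow> ennreal ((t - b) * (R + \<delta>)) \<le> EI P))"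

definition b0 :: real where "b0 = fst bd_pair"
definition \<delta>0 :: real where "\<delta>0 = snd bd_pair"

lemma b0\<delta>0: "\<delta>0 > 0" "\<And>P t. b0 \<le> t \<Longrightarrow> (\<And>x. x \<in> \<Omega> \<Longrightarrow> t \<le> P x) \<Longrightarrow> ennreal ((t - b0) * (R + \<delta>0)) \<le> EI P"
proof -
  have "\<exists>p. (\<lambda>(b, \<delta>). \<delta> > 0 \<and> (\<forall>P t. b \<le> t \<longrightarrow> (\<forall>x\<in>\<Omega>. t \<le> P x) \<longrightarrow> ennreal ((t - b) * (R + \<delta>)) \<le> EI P)) p"
    using EI_lower by auto
  then have "(\<lambda>(b, \<delta>). \<delta> > 0 \<and> (\<forall>P t. b \<le> t \<longrightarrow> (\<forall>x\<in>\<Omega>. t \<le> P x) \<longrightarrow> ennreal ((t - b) * (R + \<delta>)) \<le> EI P)) bd_pair"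
    unfolding bd_pair_def by (rule someI_ex)
  then show "\<delta>0 > 0" "\<And>P t. b0 \<le> t \<Longrightarrow> (\<And>x. x \<in> \<Omega> \<Longrightarrow> t \<le> P x) \<Longrightarrow> ennreal ((t - b0) * (R + \<delta>0)) \<le> EI P"
    unfolding b0_def \<delta>0_def by (auto split: prod.splits)
qed

definition x0 :: 'a where "x0 = (SOME x. x \<in> \<Omega>)"
lemma x0: "x0 \<in> \<Omega>" unfolding x0_def using \<Omega>ne by (simp add: some_in_eq)

lemma int_const_\<rho>: "integral\<^sup>L MM (\<lambda>y. \<rho> y * K) = K * R"
  unfolding R_def by simp

lemma int_\<rho>_const: "integrable MM (\<lambda>y. \<rho> y * K)" using \<rho>_int by simp

lemma JR_key:
  assumes P: "cconc P" "bnd P B"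
  defines "t \<equiv> P x0 - C0"
  shows "\<And>x. x \<in> \<Omega> \<Longrightarrow> t \<le> P x \<and> P x \<le> t + 2 * C0"
    and "JR P \<le> (t + 2 * C0) * R"
    and "b0 \<le> t \<Longrightarrow> JR P \<le> (t + 2 * C0) * R - (t - b0) * (R + \<delta>0)"
proof -
  show osc: "t \<le> P x \<and> P x \<le> t + 2 * C0" if x: "x \<in> \<Omega>" for x
    using cconc_osc[OF P x x0] cconc_osc[OF P x0 x] unfolding t_def by simp
  have ctle: "ct P y \<le> t + 2 * C0" if y: "y \<in> \<Omega>" for y
    using ct_le[OF P(2) y y] c_diag[of y] osc[OF y] by simp
  have I: "integral\<^sup>L MM (\<lambda>y. \<rho> y * ct P y) \<le> (t + 2 * C0) * R"
  proof -
    have "integral\<^sup>L MM (\<lambda>y. \<rho> y * ct P y) \<le> integral\<^sup>L MM (\<lambda>y. \<rho> y * (t + 2 * C0))"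
      using int_mono_\<rho>[OF int_\<rho>ct[OF P(2)] int_\<rho>_const, of "t + 2 * C0"] ctle by blast
    then show ?thesis unfolding int_const_\<rho> .
  qed
  have E0: "0 \<le> enn2real (EI P)" by simp
  show "JR P \<le> (t + 2 * C0) * R" unfolding JR_def using I E0 by linarith
  assume tb: "b0 \<le> t"
  have "ennreal ((t - b0) * (R + \<delta>0)) \<le> EI P"
    by (rule b0\<delta>0(2)[OF tb]) (use osc in auto)
  then have "enn2real (ennreal ((t - b0) * (R + \<delta>0))) \<le> enn2real (EI P)"
    using EI_fin[OF P(2)] by (rule enn2real_mono)
  moreover have "0 \<le> (t - b0) * (R + \<delta>0)" using tb R_pos b0\<delta>0(1) by simp
  ultimately have "(t - b0) * (R + \<delta>0) \<le> enn2real (EI P)" by simp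
  then show "JR P \<le> (t + 2 * C0) * R - (t - b0) * (R + \<delta>0)" unfolding JR_def using I by simp
qed

definition Jmax :: real where "Jmax = (b0 + 2 * C0) * R"

lemma JR_le_Jmax: assumes "cconc P" "bnd P B" shows "JR P \<le> Jmax"
proof -
  define t where "t = P x0 - C0"
  show ?thesis
  proof (cases "b0 \<le> t")
    case True
    have "JR P \<le> (t + 2 * C0) * R - (t - b0) * (R + \<delta>0)" using JR_key(3)[OF assms] True t_def by simp
    also have "\<dots> = (b0 + 2 * C0) * R - (t - b0) * \<delta>0" by (simp add: algebra_simps)
    also have "\<dots> \<le> (b0 + 2 * C0) * R" using True b0\<delta>0(1) by simp
    finally show ?thesis unfolding Jmax_def .
  next
    case False
    have "JR P \<le> (t + 2 * C0) * R" using JR_key(2)[OF assms] t_def by simp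
    also have "\<dots> \<le> (b0 + 2 * C0) * R" using False R_pos by (intro mult_right_mono) auto
    finally show ?thesis unfolding Jmax_def .
  qed
qed

lemma JR_level_bnd: "\<exists>B'. \<forall>P B. cconc P \<longrightarrow> bnd P B \<longrightarrow> L \<le> JR P \<longrightarrow> bnd P B'"
proof -
  define T1 where "T1 = b0 + \<bar>Jmax - L\<bar> / \<delta>0"
  define T0 where "T0 = L / R - 2 * C0"
  have "bnd P (\<bar>T0\<bar> + \<bar>T1\<bar> + 2 * C0)" if P: "cconc P" "bnd P B" and L: "L \<le> JR P" for P B
  proof -
    define t where "t = P x0 - C0"
    have "L \<le> (t + 2 * C0) * R" using JR_key(2)[OF P] L t_def by simp
    then have "L / R \<le> t + 2 * C0" using R_pos by (simp add: divide_le_eq)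
    then have tlo: "T0 \<le> t" unfolding T0_def by simp
    have thi: "t \<le> T1"
    proof (cases "b0 \<le> t")
      case True
      have "L \<le> (t + 2 * C0) * R - (t - b0) * (R + \<delta>0)" using JR_key(3)[OF P] True L t_def by simp
      also have "\<dots> = Jmax - (t - b0) * \<delta>0" unfolding Jmax_def by (simp add: algebra_simps)
      finally have "(t - b0) * \<delta>0 \<le> Jmax - L" by simp
      then have "t - b0 \<le> (Jmax - L) / \<delta>0" using b0\<delta>0(1) by (simp add: le_divide_eq)
      also have "\<dots> \<le> \<bar>Jmax - L\<bar> / \<delta>0" using b0\<delta>0(1) by (simp add: divide_right_mono)
      finally show ?thesis unfolding T1_def by simp
    next
      case False
      then show ?thesis unfolding T1_def using b0\<delta>0(1) by (smt (verit) divide_nonneg_pos abs_ge_zero)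
    qed
    show ?thesis unfolding bnd_def
    proof
      fix x assume x: "x \<in> \<Omega>"
      have "t \<le> P x \<and> P x \<le> t + 2 * C0" using JR_key(1)[OF P x] t_def by simp
      then show "\<bar>P x\<bar> \<le> \<bar>T0\<bar> + \<bar>T1\<bar> + 2 * C0" using tlo thi C0(1) by linarith
    qed
  qed
  then show ?thesis by blast
qed

section \<open>Continuity and lattice property of the dual functional\<close>

lemma int_\<rho>_add:
  assumes "integrable MM (\<lambda>y. \<rho> y * u y)" "integrable MM (\<lambda>y. \<rho> y * v y)"
  shows "integrable MM (\<lambda>y. \<rho> y * (u y + v y))"
    and "integral\<^sup>L MM (\<lambda>y. \<rho> y * (u y + v y)) = integral\<^sup>L MM (\<lambda>y. \<rho> y * u y) + integral\<^sup>L MM (\<lambda>y. \<rho> y * v y)"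
proof -
  have eq: "(\<lambda>y. \<rho> y * (u y + v y)) = (\<lambda>y. \<rho> y * u y + \<rho> y * v y)" by (simp add: distrib_left)
  show "integrable MM (\<lambda>y. \<rho> y * (u y + v y))" unfolding eq using assms by simp
  show "integral\<^sup>L MM (\<lambda>y. \<rho> y * (u y + v y)) = integral\<^sup>L MM (\<lambda>y. \<rho> y * u y) + integral\<^sup>L MM (\<lambda>y. \<rho> y * v y)"
    unfolding eq using assms by (rule Bochner_Integration.integral_add)
qed

lemma JR_lip: "\<exists>K. \<forall>P Q e. bnd P B \<longrightarrow> bnd Q B \<longrightarrow> 0 \<le> e \<longrightarrow> (\<forall>x\<in>\<Omega>. \<bar>P x - Q x\<bar> \<le> e) \<longrightarrow>
   JR Q \<le> JR P + e * K"
proof -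
  obtain Z G where Z: "Z > 0" "\<forall>x\<in>\<Omega>. \<forall>b b'. b \<le> b' \<longrightarrow> \<bar>b'\<bar> \<le> B \<longrightarrow> scr b' x \<le> scr b x + (b' - b) * Z \<and> scr b' x \<le> G"
    using sc_unif[of B] by blast
  have "JR Q \<le> JR P + e * (R + Z * mu)"
    if P: "bnd P B" and Q: "bnd Q B" and e: "0 \<le> e" and PQ: "\<forall>x\<in>\<Omega>. \<bar>P x - Q x\<bar> \<le> e" for P Q e
  proof -
    have ctQ: "ct Q y \<le> ct P y + e" if y: "y \<in> \<Omega>" for y
      by (rule ct_shift[OF Q P _ y]) (use PQ in force)
    have i1: "integrable MM (\<lambda>y. \<rho> y * (ct P y + e))"
      by (rule int_\<rho>_add(1)[OF int_\<rho>ct[OF P] int_\<rho>_const])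
    have "integral\<^sup>L MM (\<lambda>y. \<rho> y * ct Q y) \<le> integral\<^sup>L MM (\<lambda>y. \<rho> y * (ct P y + e))"
      by (rule int_mono_\<rho>[OF int_\<rho>ct[OF Q] i1 ctQ])
    also have "\<dots> = integral\<^sup>L MM (\<lambda>y. \<rho> y * ct P y) + e * R"
      using int_\<rho>_add(2)[OF int_\<rho>ct[OF P] int_\<rho>_const[of e]] int_const_\<rho> by simp
    finally have A: "integral\<^sup>L MM (\<lambda>y. \<rho> y * ct Q y) \<le> integral\<^sup>L MM (\<lambda>y. \<rho> y * ct P y) + e * R" .
    have pw: "ennreal (scr (P x) x) \<le> ennreal (scr (Q x) x) + ennreal (e * Z)" if x: "x \<in> \<Omega>" for x
    proof -
      have "scr (P x) x \<le> scr (Q x) x + e * Z"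
      proof (cases "Q x \<le> P x")
        case True
        have "scr (P x) x \<le> scr (Q x) x + (P x - Q x) * Z"
          using Z(2) x True bndD[OF P x] by blast
        also have "(P x - Q x) * Z \<le> e * Z" using PQ x True Z(1) by (intro mult_right_mono) auto
        finally show ?thesis by simp
      next
        case False
        then have "scr (P x) x \<le> scr (Q x) x" using scr_mono[OF x] by simp
        then show ?thesis using mult_nonneg_nonneg[of e Z] e Z(1) by linarith
      qed
      moreover have "0 \<le> scr (Q x) x" "0 \<le> e * Z" using sc_fin(2)[OF x] e Z(1) by auto
      ultimately show ?thesis by (simp add: ennreal_plus[symmetric] del: ennreal_plus)
    qed
    have "EI P \<le> EI Q + ennreal (e * Z) * emeasure MM (space MM)"
      unfolding EI_def by (rule nn_shift_le) (use pw in auto)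
    also have "\<dots> = EI Q + ennreal (e * Z * mu)"
      using e Z(1) mu_nonneg by (simp add: emeasure_MM ennreal_mult)
    finally have B0: "EI P \<le> EI Q + ennreal (e * Z * mu)" .
    have "enn2real (EI P) \<le> enn2real (EI Q + ennreal (e * Z * mu))"
      using B0 EI_fin[OF Q] by (intro enn2real_mono) auto
    also have "\<dots> = enn2real (EI Q) + e * Z * mu"
      using EI_fin[OF Q] e Z(1) mu_nonneg by (subst enn2real_plus) auto
    finally have B: "enn2real (EI P) \<le> enn2real (EI Q) + e * Z * mu" .
    show ?thesis unfolding JR_def using A B by (simp add: algebra_simps)
  qed
  then show ?thesis by blast
qed

lemma lattice:
  assumes P1: "cconc P1" "bnd P1 B" and P2: "cconc P2" "bnd P2 B"
  defines "Mx \<equiv> \<lambda>x. max (P1 x) (P2 x)" and "Mn \<equiv> \<lambda>x. min (P1 x) (P2 x)"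
  shows "cconc Mx" "bnd Mx B" "cconc (cb (ct Mn))" "bnd (cb (ct Mn)) B"
    and "JR P1 + JR P2 \<le> JR Mx + JR (cb (ct Mn))"
proof -
  show "cconc Mx" unfolding Mx_def by (rule cconc_max[OF P1 P2])
  show bMx: "bnd Mx B" using P1(2) P2(2) unfolding bnd_def Mx_def by (force simp: abs_le_iff max_def)
  have bMn: "bnd Mn B" using P1(2) P2(2) unfolding bnd_def Mn_def by (force simp: abs_le_iff min_def)
  show "cconc (cb (ct Mn))" by (rule cconc_cbct[OF bMn])
  show bMn': "bnd (cb (ct Mn)) B" by (intro cb_bnd ct_bnd bMn)
  have pw: "ct P1 y + ct P2 y \<le> ct Mx y + ct (cb (ct Mn)) y" if y: "y \<in> \<Omega>" for y
  proof -
    have "ct P1 y \<le> ct Mx y + 0" by (rule ct_shift[OF P1(2) bMx _ y]) (simp add: Mx_def)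
    moreover have "ct P2 y \<le> ct Mx y + 0" by (rule ct_shift[OF P2(2) bMx _ y]) (simp add: Mx_def)
    moreover have "min (ct P1 y) (ct P2 y) \<le> ct Mn y"
    proof (rule ct_ge[OF bMn y])
      fix x assume x: "x \<in> \<Omega>"
      show "min (ct P1 y) (ct P2 y) \<le> Mn x + c x y"
        using ct_le[OF P1(2) x y] ct_le[OF P2(2) x y] unfolding Mn_def by linarith
    qed
    moreover have "ct (cb (ct Mn)) y = ct Mn y" by (rule ct_cb_ct[OF bMn y])
    ultimately show ?thesis by linarith
  qed
  have I: "integral\<^sup>L MM (\<lambda>y. \<rho> y * ct P1 y) + integral\<^sup>L MM (\<lambda>y. \<rho> y * ct P2 y)
      \<le> integral\<^sup>L MM (\<lambda>y. \<rho> y * ct Mx y) + integral\<^sup>L MM (\<lambda>y. \<rho> y * ct (cb (ct Mn)) y)"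
    using int_mono_\<rho>[OF int_\<rho>_add(1)[OF int_\<rho>ct[OF P1(2)] int_\<rho>ct[OF P2(2)]]
        int_\<rho>_add(1)[OF int_\<rho>ct[OF bMx] int_\<rho>ct[OF bMn']] pw]
    unfolding int_\<rho>_add(2)[OF int_\<rho>ct[OF P1(2)] int_\<rho>ct[OF P2(2)]]
      int_\<rho>_add(2)[OF int_\<rho>ct[OF bMx] int_\<rho>ct[OF bMn']] .
  define U where "U = {x\<in>\<Omega>. P1 x \<le> P2 x}"
  have m1: "P1 \<in> borel_measurable MM" by (rule cont_meas[OF cconc_cont[OF P1]])
  have m2: "P2 \<in> borel_measurable MM" by (rule cont_meas[OF cconc_cont[OF P2]])
  have U: "U \<in> sets MM"
  proof -
    have "{x\<in>space MM. P1 x \<le> P2 x} \<in> sets MM" using m1 m2 by measurable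
    then show ?thesis unfolding U_def by simp
  qed
  define f where "f Q V = (\<integral>\<^sup>+x. ennreal (scr (Q x) x) * indicator V x \<partial>MM)" for Q V
  have split: "EI Q = f Q U + f Q (\<Omega> - U)" for Q
    unfolding EI_def f_def using nn_split[OF U, of "\<lambda>x. ennreal (scr (Q x) x)"] by simp
  have "f Mx U = f P2 U" unfolding f_def
    by (intro nn_integral_cong) (auto simp: U_def Mx_def indicator_def)
  moreover have "f Mx (\<Omega> - U) = f P1 (\<Omega> - U)" unfolding f_def
    by (intro nn_integral_cong) (auto simp: U_def Mx_def indicator_def)
  moreover have "f Mn U = f P1 U" unfolding f_def
    by (intro nn_integral_cong) (auto simp: U_def Mn_def indicator_def)
  moreover have "f Mn (\<Omega> - U) = f P2 (\<Omega> - U)" unfolding f_def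
    by (intro nn_integral_cong) (auto simp: U_def Mn_def indicator_def)
  ultimately have E: "EI Mx + EI Mn = EI P1 + EI P2" unfolding split by (simp add: ac_simps)
  have E2: "EI (cb (ct Mn)) \<le> EI Mn" by (rule EI_mono) (rule cb_ct_le[OF bMn])
  have "enn2real (EI Mx) + enn2real (EI (cb (ct Mn))) \<le> enn2real (EI Mx) + enn2real (EI Mn)"
    using E2 EI_fin[OF bMn] by (simp add: enn2real_mono)
  also have "\<dots> = enn2real (EI Mx + EI Mn)" using EI_fin[OF bMx] EI_fin[OF bMn] by (simp add: enn2real_plus)
  also have "\<dots> = enn2real (EI P1) + enn2real (EI P2)"
    unfolding E using EI_fin[OF P1(2)] EI_fin[OF P2(2)] by (simp add: enn2real_plus)
  finally have "enn2real (EI Mx) + enn2real (EI (cb (ct Mn))) \<le> enn2real (EI P1) + enn2real (EI P2)" .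
  then show "JR P1 + JR P2 \<le> JR Mx + JR (cb (ct Mn))" unfolding JR_def using I by linarith
qed

section \<open>Limits of sequences of c-concave functions\<close>

lemma unif_conv:
  assumes Pn: "\<And>n. cconc (Pn n)" "\<And>n. bnd (Pn n) B"
    and lim: "\<And>x. x \<in> \<Omega> \<Longrightarrow> (\<lambda>n. Pn n x) \<longlonglongrightarrow> P x"
    and e: "e > 0"
  shows "\<exists>N. \<forall>n\<ge>N. \<forall>x\<in>\<Omega>. \<bar>Pn n x - P x\<bar> \<le> e"
proof -
  obtain d where d: "d > 0" and D: "\<forall>P B x x'. cconc P \<longrightarrow> bnd P B \<longrightarrow> x \<in> \<Omega> \<longrightarrow> x' \<in> \<Omega> \<longrightarrow> dist x x' < d \<longrightarrow>
      \<bar>P x - P x'\<bar> \<le> e / 3" using cconc_modulus[of "e/3"] e by auto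
  obtain F where F: "finite F" "F \<subseteq> \<Omega>" "\<forall>x\<in>\<Omega>. \<exists>f\<in>F. dist x f < d"
    using finite_net[OF \<Omega>bdd d] by blast
  have "\<forall>f\<in>F. \<forall>\<^sub>F n in sequentially. \<bar>Pn n f - P f\<bar> < e / 3"
  proof
    fix f assume "f \<in> F"
    then have "(\<lambda>n. Pn n f) \<longlonglongrightarrow> P f" using F(2) lim by blast
    then have "(\<lambda>n. Pn n f - P f) \<longlonglongrightarrow> 0" by (simp add: LIM_zero)
    then have "\<forall>\<epsilon>>0. \<forall>\<^sub>F n in sequentially. dist (Pn n f - P f) 0 < \<epsilon>" unfolding tendsto_iff .
    moreover have "e / 3 > 0" using e by simp
    ultimately have "\<forall>\<^sub>F n in sequentially. dist (Pn n f - P f) 0 < e / 3" by blast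
    then show "\<forall>\<^sub>F n in sequentially. \<bar>Pn n f - P f\<bar> < e / 3" by (simp add: dist_real_def)
  qed
  then have "\<forall>\<^sub>F n in sequentially. \<forall>f\<in>F. \<bar>Pn n f - P f\<bar> < e / 3"
    using F(1) by (simp add: eventually_ball_finite)
  then obtain N where N: "\<And>n f. n \<ge> N \<Longrightarrow> f \<in> F \<Longrightarrow> \<bar>Pn n f - P f\<bar> < e / 3"
    unfolding eventually_sequentially by blast
  have "\<bar>Pn n x - P x\<bar> \<le> e" if n: "n \<ge> N" and x: "x \<in> \<Omega>" for n x
  proof -
    obtain f where f: "f \<in> F" "dist x f < d" using F(3) x by blast
    have fO: "f \<in> \<Omega>" using f F(2) by blast
    have 1: "\<bar>Pn k x - Pn k f\<bar> \<le> e / 3" for k using D[rule_format, OF Pn(1)[of k] Pn(2)[of k] x fO f(2)] .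
    have "(\<lambda>k. \<bar>Pn k x - Pn k f\<bar>) \<longlonglongrightarrow> \<bar>P x - P f\<bar>"
      by (intro tendsto_intros lim x fO)
    then have 2: "\<bar>P x - P f\<bar> \<le> e / 3" by (rule LIMSEQ_le_const2) (use 1 in auto)
    have 3: "\<bar>Pn n f - P f\<bar> < e / 3" using N[OF n f(1)] .
    show ?thesis using 1[of n] 2 3 by linarith
  qed
  then show ?thesis by blast
qed

lemma seq_limit:
  assumes Pn: "\<And>n. cconc (Pn n)" "\<And>n. bnd (Pn n) B"
    and lim: "\<And>x. x \<in> \<Omega> \<Longrightarrow> (\<lambda>n. Pn n x) \<longlonglongrightarrow> P x"
    and L: "\<And>n. L \<le> JR (Pn n)"
  shows "cconc P" "bnd P B" "L \<le> JR P"
proof -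
  show bP: "bnd P B" unfolding bnd_def
  proof
    fix x assume x: "x \<in> \<Omega>"
    have "(\<lambda>n. \<bar>Pn n x\<bar>) \<longlonglongrightarrow> \<bar>P x\<bar>" by (intro tendsto_intros lim x)
    then show "\<bar>P x\<bar> \<le> B" by (rule LIMSEQ_le_const2) (use bndD[OF Pn(2) x] in auto)
  qed
  have U: "\<exists>n. \<forall>x\<in>\<Omega>. \<bar>Pn n x - P x\<bar> \<le> e" if "e > 0" for e
    using unif_conv[OF Pn lim that] by blast
  show "cconc P" by (rule cconc_unif_limit[OF Pn bP U])
  obtain K where K: "\<forall>P Q e. bnd P B \<longrightarrow> bnd Q B \<longrightarrow> 0 \<le> e \<longrightarrow> (\<forall>x\<in>\<Omega>. \<bar>P x - Q x\<bar> \<le> e) \<longrightarrow>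
   JR Q \<le> JR P + e * K" using JR_lip[of B] by blast
  show "L \<le> JR P"
  proof (rule field_le_epsilon)
    fix e :: real assume e: "e > 0"
    define e' where "e' = e / (\<bar>K\<bar> + 1)"
    have e': "e' > 0" unfolding e'_def using e by simp
    obtain n where n: "\<forall>x\<in>\<Omega>. \<bar>Pn n x - P x\<bar> \<le> e'" using U[OF e'] by blast
    have "\<forall>x\<in>\<Omega>. \<bar>P x - Pn n x\<bar> \<le> e'" using n by (simp add: abs_minus_commute)
    then have "JR (Pn n) \<le> JR P + e' * K" using K[rule_format, OF bP Pn(2)[of n]] e' by simp
    moreover have "e' * K \<le> e"
    proof -
      have "e' * K \<le> e' * (\<bar>K\<bar> + 1)" using e' by (intro mult_left_mono) auto
      also have "\<dots> = e" unfolding e'_def by simp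
      finally show ?thesis .
    qed
    ultimately show "L \<le> JR P + e" using L[of n] by linarith
  qed
qed

section \<open>Existence of a maximizer\<close>

definition Kr :: "('a \<Rightarrow> real) set" where "Kr = {P. cconc P \<and> (\<exists>B. bnd P B)}"

definition Sr :: real where "Sr = (SUP P\<in>Kr. JR P)"

lemma zero_Kr: "(\<lambda>_. 0) \<in> Kr"
proof -
  have b0: "bnd (\<lambda>_. 0) 0" unfolding bnd_def by simp
  have ct0: "ct (\<lambda>_. 0) y = 0" if y: "y \<in> \<Omega>" for y
  proof (rule antisym)
    show "ct (\<lambda>_. 0) y \<le> 0" using ct_le[OF b0 y y] c_diag[of y] by simp
    show "0 \<le> ct (\<lambda>_. 0) y" by (rule ct_ge[OF b0 y]) (simp add: c_nonneg)
  qed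
  have "cb (ct (\<lambda>_. 0)) x = 0" if x: "x \<in> \<Omega>" for x
  proof -
    have "cb (ct (\<lambda>_. 0)) x = cb (\<lambda>_. 0) x" by (rule cb_cong) (simp add: ct0)
    also have "\<dots> = 0"
    proof (rule antisym)
      show "cb (\<lambda>_. 0) x \<le> 0" by (rule cb_le[OF b0 x]) (simp add: c_nonneg)
      show "0 \<le> cb (\<lambda>_. 0) x" using cb_ge[OF b0 x x] c_diag[of x] by simp
    qed
    finally show ?thesis .
  qed
  then show ?thesis unfolding Kr_def cconc_def using b0 by auto
qed

lemma Kr_ne: "Kr \<noteq> {}" using zero_Kr by blast

lemma Sr_bdd: "bdd_above (JR ` Kr)"
proof (rule bdd_aboveI[of _ Jmax])
  fix y assume "y \<in> JR ` Kr"
  then obtain P B where "y = JR P" "cconc P" "bnd P B" unfolding Kr_def by blast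
  then show "y \<le> Jmax" using JR_le_Jmax by simp
qed

lemma JR_le_Sr: "P \<in> Kr \<Longrightarrow> JR P \<le> Sr"
  unfolding Sr_def by (rule cSUP_upper[OF _ Sr_bdd])

lemma Sr_approx: "e > 0 \<Longrightarrow> \<exists>P\<in>Kr. Sr - e < JR P"
  unfolding Sr_def using less_cSUP_iff[OF Kr_ne Sr_bdd, of "(SUP P\<in>Kr. JR P) - e"] by simp

definition B1 :: real where
  "B1 = (SOME B'. \<forall>P B. cconc P \<longrightarrow> bnd P B \<longrightarrow> Sr - 1 \<le> JR P \<longrightarrow> bnd P B')"

lemma B1: assumes "P \<in> Kr" "Sr - 1 \<le> JR P" shows "bnd P B1"
proof -
  have "\<forall>P B. cconc P \<longrightarrow> bnd P B \<longrightarrow> Sr - 1 \<le> JR P \<longrightarrow> bnd P B1"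
    unfolding B1_def using JR_level_bnd[of "Sr - 1"] by (rule someI_ex)
  moreover obtain B where "cconc P" "bnd P B" using assms(1) unfolding Kr_def by blast
  ultimately show ?thesis using assms(2) by blast
qed

lemma bnd_mono: "bnd P B \<Longrightarrow> B \<le> B' \<Longrightarrow> bnd P B'"
  unfolding bnd_def by force

lemma max_Kr:
  assumes "P1 \<in> Kr" "P2 \<in> Kr"
  shows "(\<lambda>x. max (P1 x) (P2 x)) \<in> Kr" "JR P1 + JR P2 - Sr \<le> JR (\<lambda>x. max (P1 x) (P2 x))"
proof -
  obtain B1' B2' where b: "cconc P1" "bnd P1 B1'" "cconc P2" "bnd P2 B2'" using assms unfolding Kr_def by blast
  have c1: "bnd P1 (max B1' B2')" "bnd P2 (max B1' B2')" using b by (auto intro: bnd_mono)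
  note L = lattice[OF b(1) c1(1) b(3) c1(2)]
  show "(\<lambda>x. max (P1 x) (P2 x)) \<in> Kr" using L(1,2) unfolding Kr_def by blast
  have "cb (ct (\<lambda>x. min (P1 x) (P2 x))) \<in> Kr" using L(3,4) unfolding Kr_def by blast
  then have "JR (cb (ct (\<lambda>x. min (P1 x) (P2 x)))) \<le> Sr" by (rule JR_le_Sr)
  then show "JR P1 + JR P2 - Sr \<le> JR (\<lambda>x. max (P1 x) (P2 x))" using L(5) by linarith
qed

lemma runmax_Kr:
  fixes p :: "nat \<Rightarrow> 'a \<Rightarrow> real" and n m :: nat
  assumes "\<And>i. p i \<in> Kr"
  shows "runmax p n m \<in> Kr"
proof (induction m)
  case 0 then show ?case using assms by simp
next
  case (Suc m)
  have "(\<lambda>x. max (runmax p n m x) (p (n + Suc m) x)) \<in> Kr" by (rule max_Kr(1)[OF Suc assms])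
  then show ?case by (simp only: runmax.simps)
qed

lemma pow_small: "e > 0 \<Longrightarrow> \<exists>N. ((1::real)/2) ^ N < e"
proof -
  assume e: "e > 0"
  have "(\<lambda>n. ((1::real)/2) ^ n) \<longlonglongrightarrow> 0" by (rule LIMSEQ_power_zero) simp
  from LIMSEQ_D[OF this e] obtain N where N: "\<forall>n\<ge>N. norm (((1::real)/2) ^ n - 0) < e" by blast
  have "norm (((1::real)/2) ^ N - 0) < e" using N by blast
  moreover have "norm (((1::real)/2) ^ N - 0) = (1/2) ^ N" by simp
  ultimately show ?thesis by (intro exI[of _ N]) simp
qed

lemma exists_maximizer: "\<exists>q\<in>Kr. JR q = Sr"
proof -
  define w where "w n = ((1::real)/2) ^ (n + 2)" for n
  have wpos: "w n > 0" for n unfolding w_def by simp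
  have wle: "w n \<le> 1/4" for n unfolding w_def by (simp add: power_le_one power_add)
  have wsplit: "w (n + Suc m) = w n * (1/2) ^ Suc m" for n m unfolding w_def by (simp add: power_add ac_simps)
  have wmono: "w (N + n) \<le> w N" for N n unfolding w_def by (simp add: power_add power_le_one)
  have "\<forall>n. \<exists>P. P \<in> Kr \<and> Sr - w n < JR P" using Sr_approx[OF wpos] by blast
  from choice[OF this] obtain p where p0: "\<forall>n. p n \<in> Kr \<and> Sr - w n < JR (p n)" by blast
  have p: "\<And>n. p n \<in> Kr" "\<And>n. Sr - w n < JR (p n)" using p0 by auto
  have rm: "runmax p n m \<in> Kr \<and> Sr - (2 * w n - w n * (1/2) ^ m) \<le> JR (runmax p n m)" for n m
  proof (induction m)
    case 0 then show ?case using p[of n] by simp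
  next
    case (Suc m)
    have K: "runmax p n m \<in> Kr" using Suc by blast
    have "JR (runmax p n m) + JR (p (n + Suc m)) - Sr \<le> JR (runmax p n (Suc m))"
      using max_Kr(2)[OF K p(1)] by simp
    moreover have "Sr - w n * (1/2) ^ Suc m < JR (p (n + Suc m))" using p(2)[of "n + Suc m"] unfolding wsplit .
    moreover have "w n * (1/2) ^ m = 2 * (w n * (1/2) ^ Suc m)" by simp
    ultimately have "Sr - (2 * w n - w n * (1/2) ^ Suc m) \<le> JR (runmax p n (Suc m))" using Suc by linarith
    moreover have "runmax p n (Suc m) \<in> Kr" by (rule runmax_Kr) (rule p(1))
    ultimately show ?case by blast
  qed
  have rmL: "Sr - 2 * w n \<le> JR (runmax p n m)" for n m
  proof -
    have "0 \<le> w n * (1/2) ^ m" using wpos[of n] by simp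
    then show ?thesis using rm[of n m] by linarith
  qed
  have rmB: "bnd (runmax p n m) B1" for n m
  proof (rule B1)
    show "runmax p n m \<in> Kr" using rm[of n m] by blast
    show "Sr - 1 \<le> JR (runmax p n m)" using rmL[of n m] wle[of n] by linarith
  qed
  have rmC: "cconc (runmax p n m)" for n m using rm unfolding Kr_def by blast
  define r where "r n x = (SUP m. runmax p n m x)" for n x
  have rbdd: "bdd_above (range (\<lambda>m. runmax p n m x))" if x: "x \<in> \<Omega>" for n x
    using bndD[OF rmB x] by (intro bdd_aboveI[of _ B1]) (auto simp: abs_le_iff)
  have rlim: "(\<lambda>m. runmax p n m x) \<longlonglongrightarrow> r n x" if x: "x \<in> \<Omega>" for n x
    unfolding r_def by (rule LIMSEQ_incseq_SUP[OF rbdd[OF x] runmax_incseq])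
  have r: "cconc (r n)" "bnd (r n) B1" "Sr - 2 * w n \<le> JR (r n)" for n
    using seq_limit[of "runmax p n" B1 "r n" "Sr - 2 * w n", OF rmC rmB rlim rmL] by auto
  have rdec: "r (Suc n) x \<le> r n x" if x: "x \<in> \<Omega>" for n x
    unfolding r_def
  proof (rule cSUP_least)
    fix m
    have "runmax p (Suc n) m x \<le> runmax p n (Suc m) x" by (rule runmax_shift)
    also have "\<dots> \<le> (SUP m. runmax p n m x)" by (rule cSUP_upper[OF _ rbdd[OF x]]) simp
    finally show "runmax p (Suc n) m x \<le> (SUP m. runmax p n m x)" .
  qed simp
  define q where "q x = (INF n. r n x)" for x
  have qlim: "(\<lambda>n. r n x) \<longlonglongrightarrow> q x" if x: "x \<in> \<Omega>" for x
  proof -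
    have "bdd_below (range (\<lambda>n. r n x))"
    proof (rule bdd_belowI[of _ "- B1"])
      fix y assume "y \<in> range (\<lambda>n. r n x)"
      then obtain n where "y = r n x" by blast
      then show "- B1 \<le> y" using bndD[OF r(2) x, of n] by linarith
    qed
    moreover have "decseq (\<lambda>n. r n x)" using rdec[OF x] by (rule decseq_SucI)
    ultimately show ?thesis unfolding q_def by (rule LIMSEQ_decseq_INF)
  qed
  have qN: "cconc q \<and> bnd q B1 \<and> Sr - 2 * w N \<le> JR q" for N
  proof -
    have lim': "(\<lambda>n. r (N + n) x) \<longlonglongrightarrow> q x" if x: "x \<in> \<Omega>" for x
      using LIMSEQ_ignore_initial_segment[OF qlim[OF x], of N] by (simp add: add.commute)
    have L': "Sr - 2 * w N \<le> JR (r (N + n))" for n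
      using r(3)[of "N + n"] wmono[of N n] by linarith
    show ?thesis using seq_limit[of "\<lambda>n. r (N + n)" B1 q, OF r(1) r(2) lim' L'] by auto
  qed
  have qK: "q \<in> Kr" using qN[of 0] unfolding Kr_def by blast
  have "Sr \<le> JR q"
  proof (rule field_le_epsilon)
    fix e :: real assume e: "e > 0"
    obtain N where N: "((1::real)/2) ^ N < e" using pow_small[OF e] by blast
    have "2 * w N \<le> (1/2) ^ N" unfolding w_def by (simp add: power_add)
    then show "Sr \<le> JR q + e" using qN[of N] N by linarith
  qed
  then show ?thesis using qK JR_le_Sr[OF qK] by (intro bexI[of _ q]) auto
qed

section \<open>The largest maximizer\<close>

definition Sig :: "('a \<Rightarrow> real) set" where "Sig = {P\<in>Kr. JR P = Sr}"

lemma Sig_max: assumes "P1 \<in> Sig" "P2 \<in> Sig" shows "(\<lambda>x. max (P1 x) (P2 x)) \<in> Sig"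
proof -
  have K: "P1 \<in> Kr" "P2 \<in> Kr" "JR P1 = Sr" "JR P2 = Sr" using assms unfolding Sig_def by auto
  have "(\<lambda>x. max (P1 x) (P2 x)) \<in> Kr" by (rule max_Kr(1)[OF K(1,2)])
  moreover have "Sr \<le> JR (\<lambda>x. max (P1 x) (P2 x))" using max_Kr(2)[OF K(1,2)] K(3,4) by simp
  moreover note JR_le_Sr[OF calculation(1)]
  ultimately show ?thesis unfolding Sig_def by simp
qed

lemma Sig_bnd: "P \<in> Sig \<Longrightarrow> bnd P B1"
  unfolding Sig_def by (rule B1) auto

lemma Sig_cconc: "P \<in> Sig \<Longrightarrow> cconc P"
  unfolding Sig_def Kr_def by auto

lemma Sig_ne: "Sig \<noteq> {}" using exists_maximizer unfolding Sig_def by blast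

lemma runmax_Sig:
  fixes p :: "nat \<Rightarrow> 'a \<Rightarrow> real" and n k :: nat
  assumes "\<And>i. p i \<in> Sig"
  shows "runmax p n k \<in> Sig"
proof (induction k)
  case 0 then show ?case using assms by simp
next
  case (Suc k)
  have "(\<lambda>x. max (runmax p n k x) (p (n + Suc k) x)) \<in> Sig" by (rule Sig_max[OF Suc assms])
  then show ?case by (simp only: runmax.simps)
qed

lemma largest: "\<exists>U\<in>Sig. \<forall>P\<in>Sig. \<forall>x\<in>\<Omega>. P x \<le> U x"
proof -
  obtain D :: "'a set" where D: "countable D" "\<And>X. open X \<Longrightarrow> X \<noteq> {} \<Longrightarrow> \<exists>d\<in>D. d \<in> X"
    by (rule countable_dense_setE) blast
  define E where "E = D \<inter> \<Omega>"
  have E_ne: "E \<noteq> {}" using D(2)[OF \<Omega>open \<Omega>ne] unfolding E_def by blast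
  define A where "A = E \<times> (UNIV :: nat set)"
  have A: "countable A" "A \<noteq> {}" unfolding A_def E_def using D(1) E_ne E_def by auto
  define \<phi> where "\<phi> = from_nat_into A"
  have \<phi>A: "\<phi> n \<in> A" for n unfolding \<phi>_def by (rule from_nat_into[OF A(2)])
  define T where "T d = (SUP P\<in>Sig. P d)" for d
  have Tbdd: "bdd_above ((\<lambda>P. P d) ` Sig)" if d: "d \<in> \<Omega>" for d
  proof (rule bdd_aboveI[of _ B1])
    fix y assume "y \<in> (\<lambda>P. P d) ` Sig"
    then obtain P where "P \<in> Sig" "y = P d" by blast
    then show "y \<le> B1" using bndD[OF Sig_bnd d] by (simp add: abs_le_iff)
  qed
  have "\<forall>n. \<exists>P. P \<in> Sig \<and> T (fst (\<phi> n)) - inverse (real (Suc (snd (\<phi> n)))) < P (fst (\<phi> n))"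
  proof
    fix n
    have dO: "fst (\<phi> n) \<in> \<Omega>" using \<phi>A[of n] unfolding A_def E_def by auto
    have "T (fst (\<phi> n)) - inverse (real (Suc (snd (\<phi> n)))) < T (fst (\<phi> n))" by simp
    then show "\<exists>P. P \<in> Sig \<and> T (fst (\<phi> n)) - inverse (real (Suc (snd (\<phi> n)))) < P (fst (\<phi> n))"
      unfolding T_def using less_cSUP_iff[OF Sig_ne Tbdd[OF dO]] by blast
  qed
  from choice[OF this] obtain Pn where Pn0: "\<forall>n. Pn n \<in> Sig \<and> T (fst (\<phi> n)) - inverse (real (Suc (snd (\<phi> n)))) < Pn n (fst (\<phi> n))"
    by blast
  have Pn: "\<And>n. Pn n \<in> Sig" "\<And>n. T (fst (\<phi> n)) - inverse (real (Suc (snd (\<phi> n)))) < Pn n (fst (\<phi> n))"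
    using Pn0 by auto
  have rS: "runmax Pn 0 k \<in> Sig" for k by (rule runmax_Sig[OF Pn(1)])
  define U where "U x = (SUP k. runmax Pn 0 k x)" for x
  have rbdd: "bdd_above (range (\<lambda>k. runmax Pn 0 k x))" if x: "x \<in> \<Omega>" for x
  proof (rule bdd_aboveI[of _ B1])
    fix y assume "y \<in> range (\<lambda>k. runmax Pn 0 k x)"
    then obtain k where "y = runmax Pn 0 k x" by blast
    then show "y \<le> B1" using bndD[OF Sig_bnd[OF rS] x, of k] by (simp add: abs_le_iff)
  qed
  have rlim: "(\<lambda>k. runmax Pn 0 k x) \<longlonglongrightarrow> U x" if x: "x \<in> \<Omega>" for x
    unfolding U_def by (rule LIMSEQ_incseq_SUP[OF rbdd[OF x] runmax_incseq])
  have rL: "Sr \<le> JR (runmax Pn 0 k)" for k using rS[of k] unfolding Sig_def by simp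
  have U: "cconc U" "bnd U B1" "Sr \<le> JR U"
    using seq_limit[of "runmax Pn 0" B1 U Sr, OF Sig_cconc[OF rS] Sig_bnd[OF rS] rlim rL] by auto
  have UK: "U \<in> Kr" using U unfolding Kr_def by blast
  have US: "U \<in> Sig" using UK U(3) JR_le_Sr[OF UK] unfolding Sig_def by simp
  have Uge: "Pn n x \<le> U x" if x: "x \<in> \<Omega>" for n x
  proof -
    have "Pn (0 + n) x \<le> runmax Pn 0 n x" by (rule runmax_ge) simp
    also have "\<dots> \<le> U x" unfolding U_def by (rule cSUP_upper[OF _ rbdd[OF x]]) simp
    finally show ?thesis by simp
  qed
  have onE: "P d \<le> U d" if P: "P \<in> Sig" and d: "d \<in> E" for P d
  proof (rule field_le_epsilon)
    fix e :: real assume e: "e > 0"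
    obtain k where k: "inverse (real (Suc k)) < e" using reals_Archimedean[OF e] by blast
    have "(d, k) \<in> A" using d unfolding A_def by simp
    then obtain n where n: "\<phi> n = (d, k)" unfolding \<phi>_def using from_nat_into_surj[OF A(1)] by blast
    have dO: "d \<in> \<Omega>" using d unfolding E_def by simp
    have "P d \<le> T d" unfolding T_def by (rule cSUP_upper[OF P Tbdd[OF dO]])
    moreover have "T d - inverse (real (Suc k)) < Pn n d" using Pn(2)[of n] n by simp
    moreover have "Pn n d \<le> U d" by (rule Uge[OF dO])
    ultimately show "P d \<le> U d + e" using k by linarith
  qed
  have "P x \<le> U x" if P: "P \<in> Sig" and x: "x \<in> \<Omega>" for P x
  proof (rule field_le_epsilon)
    fix e :: real assume e: "e > 0"
    obtain d0 where d0: "d0 > 0" and Dm: "\<forall>P B x x'. cconc P \<longrightarrow> bnd P B \<longrightarrow> x \<in> \<Omega> \<longrightarrow> x' \<in> \<Omega> \<longrightarrow> dist x x' < d0 \<longrightarrow>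
      \<bar>P x - P x'\<bar> \<le> e / 2" using cconc_modulus[of "e/2"] e by auto
    have "open (ball x d0 \<inter> \<Omega>)" using \<Omega>open by auto
    moreover have "x \<in> ball x d0 \<inter> \<Omega>" using x d0 by simp
    then have "ball x d0 \<inter> \<Omega> \<noteq> {}" by blast
    ultimately obtain d where d: "d \<in> D" "d \<in> ball x d0 \<inter> \<Omega>" using D(2) by blast
    have dE: "d \<in> E" using d unfolding E_def by simp
    have dO: "d \<in> \<Omega>" and dd: "dist x d < d0" using d by auto
    have 1: "\<bar>P x - P d\<bar> \<le> e / 2" using Dm[rule_format, OF Sig_cconc[OF P] Sig_bnd[OF P] x dO dd] .
    have 2: "\<bar>U x - U d\<bar> \<le> e / 2" using Dm[rule_format, OF U(1) U(2) x dO dd] .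
    have 3: "P d \<le> U d" by (rule onE[OF P dE])
    show "P x \<le> U x + e" using 1 2 3 by linarith
  qed
  then show ?thesis using US by blast
qed

section \<open>Back to extended-real valued potentials\<close>

lemma osc_ereal:
  assumes cc: "c_concave \<Omega> c p" and x: "x \<in> \<Omega>" and x': "x' \<in> \<Omega>"
  shows "p x \<le> p x' + ereal C0"
proof -
  let ?q = "ctrans \<Omega> c p"
  have px: "p x = (SUP y\<in>\<Omega>. ?q y - ereal (c x y))" using cc x unfolding c_concave_def ctrans_bar_def by simp
  have px': "p x' = (SUP y\<in>\<Omega>. ?q y - ereal (c x' y))" using cc x' unfolding c_concave_def ctrans_bar_def by simp
  have "?q y - ereal (c x y) \<le> p x' + ereal C0" if y: "y \<in> \<Omega>" for y
  proof -
    have 1: "?q y - ereal (c x' y) \<le> p x'" unfolding px' using y by (rule SUP_upper)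
    have c1: "0 \<le> c x y" "c x' y \<le> C0" using c_nonneg C0(2)[OF x' y] by auto
    show ?thesis
    proof (cases "?q y")
      case (real r)
      then have "ereal (r - c x' y) \<le> p x'" using 1 by simp
      then have A: "ereal (r - c x' y) + ereal C0 \<le> p x' + ereal C0" by (rule add_right_mono)
      have B: "ereal (r - c x y) \<le> ereal (r - c x' y) + ereal C0" using c1 by simp
      have "?q y - ereal (c x y) = ereal (r - c x y)" using real by simp
      then show ?thesis using order_trans[OF B A] by simp
    next
      case PInf
      then have "p x' = \<infinity>" using 1 by simp
      then show ?thesis by simp
    next
      case MInf then show ?thesis by simp
    qed
  qed
  then show ?thesis unfolding px by (rule SUP_least)
qed

lemma trichotomy:
  assumes cc: "c_concave \<Omega> c p"
  shows "(\<forall>x\<in>\<Omega>. p x = \<infinity>) \<or> (\<forall>x\<in>\<Omega>. p x = -\<infinity>) \<or>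
         (\<exists>B. \<forall>x\<in>\<Omega>. p x = ereal (real_of_ereal (p x)) \<and> \<bar>real_of_ereal (p x)\<bar> \<le> B)"
proof (cases "\<exists>x\<in>\<Omega>. p x = \<infinity>")
  case True
  then obtain x where x: "x \<in> \<Omega>" "p x = \<infinity>" by blast
  have "p x' = \<infinity>" if "x' \<in> \<Omega>" for x' using osc_ereal[OF cc x(1) that] x(2) by simp
  then show ?thesis by blast
next
  case F1: False
  show ?thesis
  proof (cases "\<exists>x\<in>\<Omega>. p x = -\<infinity>")
    case True
    then obtain x where x: "x \<in> \<Omega>" "p x = -\<infinity>" by blast
    have "p x' = -\<infinity>" if "x' \<in> \<Omega>" for x' using osc_ereal[OF cc that x(1)] x(2) by simp
    then show ?thesis by blast
  next
    case F2: False
    have fin: "p x = ereal (real_of_ereal (p x))" if "x \<in> \<Omega>" for x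
      using F1 F2 that by (cases "p x") auto
    have "\<bar>real_of_ereal (p x)\<bar> \<le> \<bar>real_of_ereal (p x0)\<bar> + C0" if x: "x \<in> \<Omega>" for x
    proof -
      have a: "p x \<le> p x0 + ereal C0" by (rule osc_ereal[OF cc x x0])
      have b: "p x0 \<le> p x + ereal C0" by (rule osc_ereal[OF cc x0 x])
      have "real_of_ereal (p x) \<le> real_of_ereal (p x0) + C0" "real_of_ereal (p x0) \<le> real_of_ereal (p x) + C0"
        using a b fin[OF x] fin[OF x0] by (metis ereal_less_eq(3) plus_ereal.simps(1))+
      then show ?thesis by linarith
    qed
    then show ?thesis using fin by blast
  qed
qed

lemma ctrans_cong: "(\<And>x. x \<in> \<Omega> \<Longrightarrow> p x = p' x) \<Longrightarrow> ctrans \<Omega> c p = ctrans \<Omega> c p'"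
  unfolding ctrans_def by (intro ext INF_cong) auto

lemma Jstar_cong:
  assumes "\<And>x. x \<in> \<Omega> \<Longrightarrow> p x = p' x"
  shows "Jstar \<Omega> s c p \<rho> = Jstar \<Omega> s c p' \<rho>"
proof -
  have "Estar \<Omega> s p = Estar \<Omega> s p'" unfolding Estar_gen
    by (intro arg_cong[where f=enn2ereal] nn_integral_cong) (simp add: assms)
  moreover have e: "ctrans \<Omega> c p = ctrans \<Omega> c p'" by (rule ctrans_cong) (rule assms)
  ultimately show ?thesis unfolding Jstar_def by (simp only: e)
qed

lemma c_concave_cong:
  assumes "\<And>x. x \<in> \<Omega> \<Longrightarrow> p x = p' x"
  shows "c_concave \<Omega> c p \<longleftrightarrow> c_concave \<Omega> c p'"
proof -
  have e: "ctrans \<Omega> c p = ctrans \<Omega> c p'" by (rule ctrans_cong) (rule assms)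
  show ?thesis unfolding c_concave_def e
  proof (intro ball_cong refl)
    fix x assume "x \<in> \<Omega>"
    then show "(ctrans_bar \<Omega> c (ctrans \<Omega> c p') x = p x) = (ctrans_bar \<Omega> c (ctrans \<Omega> c p') x = p' x)"
      using assms by simp
  qed
qed

lemma Jstar_minf:
  assumes "\<And>x. x \<in> \<Omega> \<Longrightarrow> p x = -\<infinity>"
  shows "Jstar \<Omega> s c p \<rho> = -\<infinity>"
proof -
  have q: "ctrans \<Omega> c p y = -\<infinity>" if y: "y \<in> \<Omega>" for y
  proof -
    have "ctrans \<Omega> c p y \<le> p y + ereal (c y y)" unfolding ctrans_def using y by (rule INF_lower)
    then show ?thesis using assms[OF y] by simp
  qed
  define N where "N = {x\<in>space MM. 0 < \<rho> x}"
  have Nm: "N \<in> sets MM" unfolding N_def using \<rho>_meas by measurable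
  have pos: "(\<integral>\<^sup>+x. e2ennreal (ereal (\<rho> x) * ctrans \<Omega> c p x) \<partial>MM) = 0"
  proof -
    have "AE x in MM. e2ennreal (ereal (\<rho> x) * ctrans \<Omega> c p x) = 0"
    proof -
      have "AE x in MM. x \<in> \<Omega>" by (rule AE_I2) simp
      with \<rho>_nonneg show ?thesis
      proof eventually_elim
        case (elim x)
        then have "ereal (\<rho> x) * ctrans \<Omega> c p x \<le> 0"
          using q[of x] by (cases "\<rho> x = 0") (auto simp: zero_ereal_def[symmetric])
        then show ?case by (rule e2ennreal_neg)
      qed
    qed
    then have "(\<integral>\<^sup>+x. e2ennreal (ereal (\<rho> x) * ctrans \<Omega> c p x) \<partial>MM) = (\<integral>\<^sup>+x. 0 \<partial>MM)"
      by (rule nn_integral_cong_AE)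
    then show ?thesis by simp
  qed
  have "emeasure MM N \<noteq> 0"
  proof
    assume "emeasure MM N = 0"
    then have "N \<in> null_sets MM" using Nm by auto
    then have "AE x in MM. \<rho> x \<le> 0" by (rule AE_I') (auto simp: N_def)
    then have "integral\<^sup>L MM \<rho> \<le> integral\<^sup>L MM (\<lambda>_. 0::real)"
      by (intro integral_mono_AE \<rho>_int) auto
    then show False using R_pos unfolding R_def by simp
  qed
  have neg: "(\<integral>\<^sup>+x. e2ennreal (- (ereal (\<rho> x) * ctrans \<Omega> c p x)) \<partial>MM) = top"
  proof -
    have "top * emeasure MM N = (\<integral>\<^sup>+x. top * indicator N x \<partial>MM)"
      using Nm by (simp add: nn_integral_cmult_indicator)
    also have "\<dots> \<le> (\<integral>\<^sup>+x. e2ennreal (- (ereal (\<rho> x) * ctrans \<Omega> c p x)) \<partial>MM)"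
    proof (intro nn_integral_mono)
      fix x assume x: "x \<in> space MM"
      show "top * indicator N x \<le> e2ennreal (- (ereal (\<rho> x) * ctrans \<Omega> c p x))"
      proof (cases "x \<in> N")
        case True
        then have "0 < \<rho> x" unfolding N_def by simp
        then show ?thesis using q[of x] x by simp
      next
        case False then show ?thesis by simp
      qed
    qed
    finally show ?thesis using \<open>emeasure MM N \<noteq> 0\<close> by (simp add: ennreal_top_mult top_unique)
  qed
  have E: "eintegral \<Omega> (\<lambda>y. ereal (\<rho> y) * ctrans \<Omega> c p y) = -\<infinity>"
    unfolding eintegral_def pos neg by (simp add: zero_ennreal.rep_eq)
  define X where "X = (\<integral>\<^sup>+x. e2ennreal (sconj s (p x) x) \<partial>MM)"
  have "- \<infinity> - enn2ereal X = - \<infinity>" using enn2ereal_nonneg[of X] by (cases "enn2ereal X") auto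
  then show ?thesis unfolding Jstar_def E Estar_gen X_def by simp
qed

lemma Estar_pinf:
  assumes "\<And>x. x \<in> \<Omega> \<Longrightarrow> p x = \<infinity>"
  shows "Estar \<Omega> s p = \<infinity>"
proof -
  define I where "I = (\<integral>\<^sup>+x. e2ennreal (sconj s (p x) x) \<partial>MM)"
  have lb: "ennreal ((t - b0) * (R + \<delta>0)) \<le> I" if t: "b0 \<le> t" for t
  proof -
    have "ennreal ((t - b0) * (R + \<delta>0)) \<le> EI (\<lambda>_. t)" by (rule b0\<delta>0(2)[OF t]) simp
    also have "\<dots> \<le> I" unfolding EI_def I_def
    proof (intro nn_integral_mono)
      fix x assume "x \<in> space MM"
      then have x: "x \<in> \<Omega>" by simp
      have "sconj s (ereal t) x \<le> sconj s (p x) x" using assms[OF x] by (intro sconj_mono[OF x]) simp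
      then have "e2ennreal (sconj s (ereal t) x) \<le> e2ennreal (sconj s (p x) x)" by (rule e2ennreal_mono)
      then show "ennreal (scr t x) \<le> e2ennreal (sconj s (p x) x)" using sc_fin(1)[OF x, of t] unfolding sc_def by simp
    qed
    finally show ?thesis .
  qed
  have "I = top"
  proof (rule ccontr)
    assume "I \<noteq> top"
    then obtain r where r: "I = ennreal r" "0 \<le> r" by (cases I rule: ennreal_cases) auto
    define t where "t = b0 + (r + 1) / (R + \<delta>0)"
    have Rd: "R + \<delta>0 > 0" using R_pos b0\<delta>0(1) by simp
    have "b0 \<le> t" unfolding t_def using Rd r(2) by simp
    moreover have "(t - b0) * (R + \<delta>0) = r + 1" unfolding t_def using Rd by simp
    ultimately have "ennreal (r + 1) \<le> ennreal r" using lb r(1) by metis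
    then show False using r(2) by (simp add: ennreal_le_iff)
  qed
  then show ?thesis unfolding Estar_gen I_def[symmetric] by simp
qed

lemma finite_case:
  assumes cc: "c_concave \<Omega> c p"
    and fin: "\<forall>x\<in>\<Omega>. p x = ereal (real_of_ereal (p x)) \<and> \<bar>real_of_ereal (p x)\<bar> \<le> B"
  defines "Q \<equiv> \<lambda>x. real_of_ereal (p x)"
  shows "Q \<in> Kr" "Jstar \<Omega> s c p \<rho> = ereal (JR Q)" "\<And>x. x \<in> \<Omega> \<Longrightarrow> p x = ereal (Q x)"
proof -
  show eq: "p x = ereal (Q x)" if "x \<in> \<Omega>" for x using fin that unfolding Q_def by blast
  have bQ: "bnd Q B" unfolding bnd_def Q_def using fin by blast
  have "c_concave \<Omega> c (\<lambda>x. ereal (Q x))" using cc c_concave_cong[of p "\<lambda>x. ereal (Q x)"] eq by blast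
  then have "cconc Q" using c_concave_iff[OF bQ] by blast
  then show "Q \<in> Kr" using bQ unfolding Kr_def by blast
  have "Jstar \<Omega> s c p \<rho> = Jstar \<Omega> s c (\<lambda>x. ereal (Q x)) \<rho>" by (rule Jstar_cong) (rule eq)
  also have "\<dots> = ereal (JR Q)" by (rule JJ_eq[OF bQ])
  finally show "Jstar \<Omega> s c p \<rho> = ereal (JR Q)" .
qed

lemma main_locale:
  "\<exists>pstar \<in> Sigma_max \<Omega> s c \<rho>.
     (\<forall>p \<in> Sigma_max \<Omega> s c \<rho>. \<forall>x\<in>\<Omega>. p x \<le> pstar x) \<and>
     (\<forall>p' \<in> Sigma_max \<Omega> s c \<rho>.
        (\<forall>p \<in> Sigma_max \<Omega> s c \<rho>. \<forall>x\<in>\<Omega>. p x \<le> p' x) \<longrightarrow> (\<forall>x\<in>\<Omega>. p' x = pstar x))"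
proof -
  obtain U where US: "U \<in> Sig" and Ularge: "\<forall>P\<in>Sig. \<forall>x\<in>\<Omega>. P x \<le> U x" using largest by blast
  have Uc: "cconc U" and Ub: "bnd U B1" and UJ: "JR U = Sr"
    using US Sig_cconc Sig_bnd unfolding Sig_def by auto
  define pstar where "pstar = (\<lambda>x. ereal (U x))"
  have Um: "U \<in> borel_measurable MM" by (rule cont_meas[OF cconc_cont[OF Uc Ub]])
  have pm: "pstar \<in> borel_measurable MM" unfolding pstar_def using Um by measurable
  have "Estar \<Omega> s pstar < \<infinity>" unfolding pstar_def Estar_eq using EI_fin[OF Ub]
    by (simp add: less_top[symmetric])
  then have pX: "pstar \<in> Xstar \<Omega> s" using pm unfolding Xstar_def by simp
  have pC: "c_concave \<Omega> c pstar" unfolding pstar_def using c_concave_iff[OF Ub] Uc by simp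
  have pJ: "Jstar \<Omega> s c pstar \<rho> = ereal Sr" unfolding pstar_def JJ_eq[OF Ub] UJ ..
  have Jle: "Jstar \<Omega> s c q \<rho> \<le> ereal Sr" if q: "q \<in> Xstar \<Omega> s" "c_concave \<Omega> c q" for q
  proof -
    from trichotomy[OF q(2)] consider (inf) "\<forall>x\<in>\<Omega>. q x = \<infinity>" | (minf) "\<forall>x\<in>\<Omega>. q x = -\<infinity>"
      | (fin) B where "\<forall>x\<in>\<Omega>. q x = ereal (real_of_ereal (q x)) \<and> \<bar>real_of_ereal (q x)\<bar> \<le> B" by blast
    then show ?thesis
    proof cases
      case inf
      then have "Estar \<Omega> s q = \<infinity>" using Estar_pinf by blast
      then show ?thesis using q(1) unfolding Xstar_def by simp
    next
      case minf
      then have "Jstar \<Omega> s c q \<rho> = -\<infinity>" using Jstar_minf by blast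
      then show ?thesis by simp
    next
      case fin
      note F = finite_case[OF q(2) fin]
      show ?thesis unfolding F(2) using JR_le_Sr[OF F(1)] by simp
    qed
  qed
  have pS: "pstar \<in> Sigma_max \<Omega> s c \<rho>"
    unfolding Sigma_max_def using pX pC pJ Jle by auto
  have large: "\<forall>x\<in>\<Omega>. p x \<le> pstar x" if p: "p \<in> Sigma_max \<Omega> s c \<rho>" for p
  proof -
    have pX': "p \<in> Xstar \<Omega> s" and pC': "c_concave \<Omega> c p"
      and pge: "Jstar \<Omega> s c pstar \<rho> \<le> Jstar \<Omega> s c p \<rho>"
      using p pX pC unfolding Sigma_max_def by auto
    from trichotomy[OF pC'] consider (inf) "\<forall>x\<in>\<Omega>. p x = \<infinity>" | (minf) "\<forall>x\<in>\<Omega>. p x = -\<infinity>"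
      | (fin) B where "\<forall>x\<in>\<Omega>. p x = ereal (real_of_ereal (p x)) \<and> \<bar>real_of_ereal (p x)\<bar> \<le> B" by blast
    then show ?thesis
    proof cases
      case inf
      then have "Estar \<Omega> s p = \<infinity>" using Estar_pinf by blast
      then show ?thesis using pX' unfolding Xstar_def by simp
    next
      case minf
      then show ?thesis by simp
    next
      case fin
      note F = finite_case[OF pC' fin]
      have "Sr \<le> JR (\<lambda>x. real_of_ereal (p x))" using pge unfolding pJ F(2) by simp
      then have "(\<lambda>x. real_of_ereal (p x)) \<in> Sig" using F(1) JR_le_Sr[OF F(1)] unfolding Sig_def by simp
      with Ularge have "\<forall>x\<in>\<Omega>. (\<lambda>x. real_of_ereal (p x)) x \<le> U x" by (rule bspec)
      then have "\<forall>x\<in>\<Omega>. real_of_ereal (p x) \<le> U x" by simp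
      show ?thesis unfolding pstar_def
      proof
        fix x assume x: "x \<in> \<Omega>"
        have "real_of_ereal (p x) \<le> U x" using \<open>\<forall>x\<in>\<Omega>. real_of_ereal (p x) \<le> U x\<close> x by blast
        then have "ereal (real_of_ereal (p x)) \<le> ereal (U x)" by simp
        then show "p x \<le> ereal (U x)" using F(3)[OF x] by simp
      qed
    qed
  qed
  have uniq: "\<forall>x\<in>\<Omega>. p' x = pstar x"
    if p': "p' \<in> Sigma_max \<Omega> s c \<rho>" "\<forall>p \<in> Sigma_max \<Omega> s c \<rho>. \<forall>x\<in>\<Omega>. p x \<le> p' x" for p'
    using large[OF p'(1)] p'(2) pS by (meson antisym)
  show ?thesis using pS large uniq by blast
qed

end

theorem lemma3p4:
  fixes \<Omega> :: "'a::euclidean_space set"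
    and s :: "real \<Rightarrow> 'a \<Rightarrow> ereal"
    and c :: "'a \<Rightarrow> 'a \<Rightarrow> real"
    and \<rho>bar :: "'a \<Rightarrow> real"
  assumes "bounded_smooth_domain \<Omega>"
    and "entropy_density \<Omega> s"
    and "admissible_cost c"
    and "\<rho>bar \<in> Xspace \<Omega> s"
    and "condN \<Omega> s \<rho>bar"
  shows "\<exists>pstar \<in> Sigma_max \<Omega> s c \<rho>bar.
           (\<forall>p \<in> Sigma_max \<Omega> s c \<rho>bar. \<forall>x\<in>\<Omega>. p x \<le> pstar x) \<and>
           (\<forall>p' \<in> Sigma_max \<Omega> s c \<rho>bar.
              (\<forall>p \<in> Sigma_max \<Omega> s c \<rho>bar. \<forall>x\<in>\<Omega>. p x \<le> p' x) \<longrightarrow> (\<forall>x\<in>\<Omega>. p' x = pstar x))"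
proof -
  have D: "open \<Omega>" "bounded \<Omega>" "\<Omega> \<noteq> {}" using assms(1) unfolding bounded_smooth_domain_def by auto
  have S: "\<forall>x\<in>\<Omega>. (\<exists>z. s z x \<noteq> \<infinity>) \<and> (\<forall>z. s z x \<noteq> -\<infinity>) \<and> lsc (\<lambda>z. s z x) \<and> ereal_convex (\<lambda>z. s z x)"
    "\<forall>x\<in>\<Omega>. (\<forall>z<0. s z x = \<infinity>) \<and> s 0 x = 0"
    "\<exists>m::real. \<forall>x\<in>\<Omega>. \<forall>z. ereal m \<le> s z x"
    "((\<lambda>z. (INF x\<in>\<Omega>. s z x) / ereal z) \<longlongrightarrow> \<infinity>) at_top"
    using assms(2) unfolding entropy_density_def by blast+
  obtain m where m: "\<forall>x\<in>\<Omega>. \<forall>z. ereal m \<le> s z x" using S(3) by blast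
  have C: "\<forall>x y. 0 \<le> c x y" "\<forall>x. c x x = 0" "Ck_on 1 UNIV (\<lambda>(x, y). c x y)"
    using assms(3) unfolding admissible_cost_def by blast+
  have "(\<lambda>(x, y). c x y) differentiable_on UNIV" using C(3) by (simp add: One_nat_def)
  then have Cc: "continuous_on UNIV (\<lambda>(x, y). c x y)" by (rule differentiable_imp_continuous_on)
  have X: "integrable (lebesgue_on \<Omega>) \<rho>bar" "Efun \<Omega> s \<rho>bar < \<infinity>"
    using assms(4) unfolding Xspace_def by auto
  interpret LP \<Omega> s c \<rho>bar m
  proof
    show "open \<Omega>" "bounded \<Omega>" "\<Omega> \<noteq> {}" by (fact D)+
    show "continuous_on UNIV (\<lambda>(x, y). c x y)" by (fact Cc)
    show "\<And>x y. 0 \<le> c x y" "\<And>x. c x x = 0" using C by auto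
    show "\<And>x z. x \<in> \<Omega> \<Longrightarrow> s z x \<noteq> -\<infinity>" using S(1) by blast
    show "\<And>x z. x \<in> \<Omega> \<Longrightarrow> z < 0 \<Longrightarrow> s z x = \<infinity>" using S(2) by blast
    show "\<And>x. x \<in> \<Omega> \<Longrightarrow> s 0 x = 0" using S(2) by blast
    show "\<And>x z. x \<in> \<Omega> \<Longrightarrow> ereal m \<le> s z x" using m by blast
    show "((\<lambda>z. (INF x\<in>\<Omega>. s z x) / ereal z) \<longlongrightarrow> \<infinity>) at_top" by (fact S(4))
    show "integrable (lebesgue_on \<Omega>) \<rho>bar" "Efun \<Omega> s \<rho>bar < \<infinity>" by (fact X)+
    show "condN \<Omega> s \<rho>bar" by (fact assms(5))
  qed
  show ?thesis by (rule main_locale)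
qed

end
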